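(* Let $\mathfrak g=(\mathfrak g_1\xrightarrow{d}\mathfrak g_0)$ be a Lie algebra in the Loday–Pirashvili category $\mathcal{LM}$, with bracket $[\cdot,\cdot]$ (the Lie bracket on $\mathfrak g_0$ and the right action $\mathfrak g_1\otimes\mathfrak g_0\to\mathfrak g_1$). Consider the free graded Lie algebra on $\mathfrak g_0+\mathfrak g_1$ ($\mathfrak g_i$ in degree $i$), with bracket $\llbracket\cdot,\cdot\rrbracket$ and the differential induced by $d$, and let $E\mathfrak g$ be its quotient by the relations $\llbracket x,y\rrbracket=[x,y]$ for $x,y\in\mathfrak g_0$ and for $x\in\mathfrak g_1$, $y\in\mathfrak g_0$. Then $E\mathfrak g$ is a differential graded Lie algebra, and its truncation modulo terms of degree $\ge 2$, i.e. the map $(E\mathfrak g)_1\xrightarrow{d}(E\mathfrak g)_0$ with the restricted brackets $(E\mathfrak g)_0\otimes(E\mathfrak g)_0\to(E\mathfrak g)_0$ and $(E\mathfrak g)_1\otimes(E\mathfrak g)_0\to(E\mathfrak g)_1$, coincides with $\mathfrak g$ as a Lie algebra in $\mathcal{LM}$.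
   Context: Fix a field $\mathbf k$ of characteristic zero. The Loday–Pirashvili category $\mathcal{LM}$ has objects linear maps $U\xrightarrow{f}V$ of $\mathbf k$-vector spaces and morphisms commutative squares. A Lie algebra in $\mathcal{LM}$ is a map $M\xrightarrow{f}\mathfrak g$ where $\mathfrak g$ is a Lie algebra, $M$ is a right $\mathfrak g$-module, and $f$ is a morphism of right $\mathfrak g$-modules ($\mathfrak g$ acting on itself by the right adjoint action). *)

theory Defs
  imports Complex_Main "HOL-Library.Poly_Mapping"
begin

definition bilinear_map ::
  "('k::field \<Rightarrow> 'a::ab_group_add \<Rightarrow> 'a) \<Rightarrow> ('k \<Rightarrow> 'b::ab_group_add \<Rightarrow> 'b)
   \<Rightarrow> ('k \<Rightarrow> 'c::ab_group_add \<Rightarrow> 'c) \<Rightarrow> ('a \<Rightarrow> 'b \<Rightarrow> 'c) \<Rightarrow> bool" where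
  "bilinear_map sa sb sc f \<longleftrightarrow>
     (\<forall>x. Vector_Spaces.linear sb sc (f x)) \<and> (\<forall>y. Vector_Spaces.linear sa sc (\<lambda>x. f x y))"

text \<open>A Lie algebra in LM: a map d : g1 -> g0, where g0 is a Lie algebra (bracket br),
  g1 a right g0-module (action act), and d a morphism of right g0-modules
  (g0 acting on itself by the right adjoint action).\<close>
definition LM_lie_algebra ::
  "('k::field \<Rightarrow> 'g::ab_group_add \<Rightarrow> 'g) \<Rightarrow> ('k \<Rightarrow> 'm::ab_group_add \<Rightarrow> 'm)
   \<Rightarrow> ('g \<Rightarrow> 'g \<Rightarrow> 'g) \<Rightarrow> ('m \<Rightarrow> 'g \<Rightarrow> 'm) \<Rightarrow> ('m \<Rightarrow> 'g) \<Rightarrow> bool" where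
  "LM_lie_algebra sg sm br act d \<longleftrightarrow>
     vector_space sg \<and> vector_space sm \<and>
     bilinear_map sg sg sg br \<and>
     (\<forall>x. br x x = 0) \<and>
     (\<forall>x y z. br x (br y z) + br y (br z x) + br z (br x y) = 0) \<and>
     bilinear_map sm sg sm act \<and>
     (\<forall>m x y. act m (br x y) = act (act m x) y - act (act m y) x) \<and>
     Vector_Spaces.linear sm sg d \<and>
     (\<forall>m x. d (act m x) = br (d m) x)"

text \<open>Binary trees with labelled leaves form a basis of the free magma algebra;
  elements of the algebra are finitely supported functions trees -> k.\<close>
datatype 'x ftree = Leaf 'x | Node "'x ftree" "'x ftree"

fun tdeg :: "('g + 'm) ftree \<Rightarrow> nat" where
  "tdeg (Leaf (Inl _)) = 0"
| "tdeg (Leaf (Inr _)) = 1"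
| "tdeg (Node s u) = tdeg s + tdeg u"

definition basis_el :: "'x ftree \<Rightarrow> ('x ftree \<Rightarrow>\<^sub>0 'k::comm_ring_1)" where
  "basis_el t = Poly_Mapping.single t 1"

definition mag_smult :: "'k::comm_ring_1 \<Rightarrow> ('x ftree \<Rightarrow>\<^sub>0 'k) \<Rightarrow> ('x ftree \<Rightarrow>\<^sub>0 'k)" where
  "mag_smult c p = (\<Sum>s\<in>Poly_Mapping.keys p. Poly_Mapping.single s (c * Poly_Mapping.lookup p s))"

definition mag_mult :: "('x ftree \<Rightarrow>\<^sub>0 'k::comm_ring_1) \<Rightarrow> ('x ftree \<Rightarrow>\<^sub>0 'k) \<Rightarrow> ('x ftree \<Rightarrow>\<^sub>0 'k)" where
  "mag_mult p q = (\<Sum>s\<in>Poly_Mapping.keys p. \<Sum>u\<in>Poly_Mapping.keys q. Poly_Mapping.single (Node s u) (Poly_Mapping.lookup p s * Poly_Mapping.lookup q u))"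

definition homog :: "nat \<Rightarrow> (('g + 'm) ftree \<Rightarrow>\<^sub>0 'k::comm_ring_1) set" where
  "homog n = {a. \<forall>t\<in>Poly_Mapping.keys a. tdeg t = n}"

definition hpart :: "nat \<Rightarrow> (('g + 'm) ftree \<Rightarrow>\<^sub>0 'k::comm_ring_1) \<Rightarrow> (('g + 'm) ftree \<Rightarrow>\<^sub>0 'k)" where
  "hpart n a = (\<Sum>t\<in>{t\<in>Poly_Mapping.keys a. tdeg t = n}. Poly_Mapping.single t (Poly_Mapping.lookup a t))"

inductive_set ideal_gen :: "('x ftree \<Rightarrow>\<^sub>0 'k::comm_ring_1) set \<Rightarrow> ('x ftree \<Rightarrow>\<^sub>0 'k) set"
  for R where
  gen: "r \<in> R \<Longrightarrow> r \<in> ideal_gen R"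
| zero: "0 \<in> ideal_gen R"
| add: "a \<in> ideal_gen R \<Longrightarrow> b \<in> ideal_gen R \<Longrightarrow> a + b \<in> ideal_gen R"
| smult: "a \<in> ideal_gen R \<Longrightarrow> mag_smult c a \<in> ideal_gen R"
| left: "a \<in> ideal_gen R \<Longrightarrow> mag_mult p a \<in> ideal_gen R"
| right: "a \<in> ideal_gen R \<Longrightarrow> mag_mult a p \<in> ideal_gen R"

text \<open>Linearity of the generators (free Lie algebra on the graded VECTOR space g0+g1).\<close>
definition lin_rels ::
  "('k::comm_ring_1 \<Rightarrow> 'g::ab_group_add \<Rightarrow> 'g) \<Rightarrow> ('k \<Rightarrow> 'm::ab_group_add \<Rightarrow> 'm)
   \<Rightarrow> (('g + 'm) ftree \<Rightarrow>\<^sub>0 'k) set" where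
  "lin_rels sg sm =
     {basis_el (Leaf (Inl (x + y))) - basis_el (Leaf (Inl x)) - basis_el (Leaf (Inl y)) | x y. True}
   \<union> {basis_el (Leaf (Inl (sg c x))) - mag_smult c (basis_el (Leaf (Inl x))) | c x. True}
   \<union> {basis_el (Leaf (Inr (m + n))) - basis_el (Leaf (Inr m)) - basis_el (Leaf (Inr n)) | m n. True}
   \<union> {basis_el (Leaf (Inr (sm c m))) - mag_smult c (basis_el (Leaf (Inr m))) | c m. True}"

text \<open>Graded antisymmetry and graded Jacobi (free graded Lie algebra), on basis trees.\<close>
definition glie_rels :: "(('g + 'm) ftree \<Rightarrow>\<^sub>0 'k::comm_ring_1) set" where
  "glie_rels =
     {mag_mult (basis_el s) (basis_el u)
        + mag_smult ((-1) ^ (tdeg s * tdeg u)) (mag_mult (basis_el u) (basis_el s)) | s u. True}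
   \<union> {mag_mult (basis_el s) (mag_mult (basis_el t) (basis_el u))
        - mag_mult (mag_mult (basis_el s) (basis_el t)) (basis_el u)
        - mag_smult ((-1) ^ (tdeg s * tdeg t)) (mag_mult (basis_el t) (mag_mult (basis_el s) (basis_el u)))
      | s t u. True}"

definition E_rels ::
  "('g \<Rightarrow> 'g \<Rightarrow> 'g) \<Rightarrow> ('m \<Rightarrow> 'g \<Rightarrow> 'm) \<Rightarrow> (('g + 'm) ftree \<Rightarrow>\<^sub>0 'k::comm_ring_1) set" where
  "E_rels br act =
     {mag_mult (basis_el (Leaf (Inl x))) (basis_el (Leaf (Inl y))) - basis_el (Leaf (Inl (br x y))) | x y. True}
   \<union> {mag_mult (basis_el (Leaf (Inr m))) (basis_el (Leaf (Inl y))) - basis_el (Leaf (Inr (act m y))) | m y. True}"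

definition E_ideal ::
  "('k::comm_ring_1 \<Rightarrow> 'g::ab_group_add \<Rightarrow> 'g) \<Rightarrow> ('k \<Rightarrow> 'm::ab_group_add \<Rightarrow> 'm)
   \<Rightarrow> ('g \<Rightarrow> 'g \<Rightarrow> 'g) \<Rightarrow> ('m \<Rightarrow> 'g \<Rightarrow> 'm) \<Rightarrow> (('g + 'm) ftree \<Rightarrow>\<^sub>0 'k) set" where
  "E_ideal sg sm br act = ideal_gen (lin_rels sg sm \<union> glie_rels \<union> E_rels br act)"

fun Dtree :: "('m \<Rightarrow> 'g) \<Rightarrow> ('g + 'm) ftree \<Rightarrow> (('g + 'm) ftree \<Rightarrow>\<^sub>0 'k::comm_ring_1)" where
  "Dtree d (Leaf (Inl x)) = 0"
| "Dtree d (Leaf (Inr m)) = basis_el (Leaf (Inl (d m)))"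
| "Dtree d (Node s u) = mag_mult (Dtree d s) (basis_el u)
      + mag_smult ((-1) ^ tdeg s) (mag_mult (basis_el s) (Dtree d u))"

definition Dmag :: "('m \<Rightarrow> 'g) \<Rightarrow> (('g + 'm) ftree \<Rightarrow>\<^sub>0 'k::comm_ring_1) \<Rightarrow> (('g + 'm) ftree \<Rightarrow>\<^sub>0 'k)" where
  "Dmag d p = (\<Sum>s\<in>Poly_Mapping.keys p. mag_smult (Poly_Mapping.lookup p s) (Dtree d s))"

end

theory Submission
  imports Defs
begin


lemma lookup_sum_single:
  fixes f :: "'a \<Rightarrow> 'b::comm_monoid_add"
  shows "finite A \<Longrightarrow> Poly_Mapping.lookup (\<Sum>t\<in>A. Poly_Mapping.single t (f t)) x = (if x \<in> A then f x else 0)"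
  by (induction A rule: finite_induct) (auto simp: lookup_add lookup_single when_def)

lemma pm_expand: fixes p :: "'a \<Rightarrow>\<^sub>0 'b::comm_monoid_add" shows "p = (\<Sum>s\<in>Poly_Mapping.keys p. Poly_Mapping.single s (Poly_Mapping.lookup p s))"
  by (rule poly_mapping_eqI) (auto simp: lookup_sum_single in_keys_iff)

lemma pm_induct_on:
  fixes p :: "'a \<Rightarrow>\<^sub>0 'b::comm_monoid_add"
  assumes "Poly_Mapping.keys p \<subseteq> S" "P 0" "\<And>s c. s \<in> S \<Longrightarrow> P (Poly_Mapping.single s c)"
    "\<And>a b. P a \<Longrightarrow> P b \<Longrightarrow> P (a + b)"
  shows "P p"
proof -
  have "\<And>I. finite I \<Longrightarrow> I \<subseteq> Poly_Mapping.keys p \<Longrightarrow> P (\<Sum>s\<in>I. Poly_Mapping.single s (Poly_Mapping.lookup p s))"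
  proof -
    fix I :: "'a set" assume "finite I" "I \<subseteq> Poly_Mapping.keys p"
    then show "P (\<Sum>s\<in>I. Poly_Mapping.single s (Poly_Mapping.lookup p s))"
    proof (induction I rule: finite_induct)
      case empty then show ?case using assms(2) by simp
    next
      case (insert x F)
      then have "x \<in> S" using assms(1) by blast
      have "P (Poly_Mapping.single x (Poly_Mapping.lookup p x))" using \<open>x \<in> S\<close> by (rule assms(3))
      moreover have "P (\<Sum>s\<in>F. Poly_Mapping.single s (Poly_Mapping.lookup p s))" using insert by blast
      ultimately show ?case using insert(1,2) assms(4) by (simp add: sum.insert)
    qed
  qed
  from this[OF finite_keys order_refl] show ?thesis by (simp only: pm_expand[of p, symmetric])
qed

lemma pm_induct:
  fixes p :: "'a \<Rightarrow>\<^sub>0 'b::comm_monoid_add"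
  assumes "P 0" "\<And>s c. P (Poly_Mapping.single s c)" "\<And>a b. P a \<Longrightarrow> P b \<Longrightarrow> P (a + b)"
  shows "P p"
  by (rule pm_induct_on[of p UNIV P]) (use assms in simp_all)

lemma lookup_mag_smult[simp]: "Poly_Mapping.lookup (mag_smult c p) t = c * Poly_Mapping.lookup p t"
  unfolding mag_smult_def by (simp add: lookup_sum_single in_keys_iff)

lemma lookup_hpart[simp]: "Poly_Mapping.lookup (hpart n a) t = (if tdeg t = n then Poly_Mapping.lookup a t else 0)"
  unfolding hpart_def by (simp add: lookup_sum_single in_keys_iff)

lemma lookup_basis_el: "Poly_Mapping.lookup (basis_el s) t = (if s = t then 1 else 0)"
  unfolding basis_el_def by (simp add: lookup_single)

lemma lookup_mag_mult:
  "Poly_Mapping.lookup (mag_mult p q) t = (case t of Leaf _ \<Rightarrow> 0 | Node s u \<Rightarrow> Poly_Mapping.lookup p s * Poly_Mapping.lookup q u)"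
proof -
  have "Poly_Mapping.lookup (mag_mult p q) t = (\<Sum>s\<in>Poly_Mapping.keys p. \<Sum>u\<in>Poly_Mapping.keys q. Poly_Mapping.lookup (Poly_Mapping.single (Node s u) (Poly_Mapping.lookup p s * Poly_Mapping.lookup q u)) t)"
    unfolding mag_mult_def by (simp add: lookup_sum)
  also have "\<dots> = (case t of Leaf _ \<Rightarrow> 0 | Node s u \<Rightarrow> Poly_Mapping.lookup p s * Poly_Mapping.lookup q u)"
  proof (cases t)
    case (Leaf x) then show ?thesis by (simp add: lookup_single)
  next
    case (Node s0 u0)
    have "\<And>s. (\<Sum>u\<in>Poly_Mapping.keys q. Poly_Mapping.lookup (Poly_Mapping.single (Node s u) (Poly_Mapping.lookup p s * Poly_Mapping.lookup q u)) t)
        = (if s = s0 then Poly_Mapping.lookup p s * Poly_Mapping.lookup q u0 else 0)"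
    proof -
      fix s
      have "(\<Sum>u\<in>Poly_Mapping.keys q. Poly_Mapping.lookup (Poly_Mapping.single (Node s u) (Poly_Mapping.lookup p s * Poly_Mapping.lookup q u)) t)
         = (\<Sum>u\<in>Poly_Mapping.keys q. if s = s0 \<and> u = u0 then Poly_Mapping.lookup p s * Poly_Mapping.lookup q u else 0)"
        by (rule sum.cong) (auto simp: Node lookup_single when_def)
      also have "\<dots> = (if s = s0 then Poly_Mapping.lookup p s * Poly_Mapping.lookup q u0 else 0)"
        by (cases "s = s0"; cases "u0 \<in> Poly_Mapping.keys q") (simp_all add: in_keys_iff)
      finally show "?thesis s" .
    qed
    then have "(\<Sum>s\<in>Poly_Mapping.keys p. \<Sum>u\<in>Poly_Mapping.keys q. Poly_Mapping.lookup (Poly_Mapping.single (Node s u) (Poly_Mapping.lookup p s * Poly_Mapping.lookup q u)) t)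
        = (\<Sum>s\<in>Poly_Mapping.keys p. if s = s0 then Poly_Mapping.lookup p s * Poly_Mapping.lookup q u0 else 0)"
      by simp
    also have "\<dots> = Poly_Mapping.lookup p s0 * Poly_Mapping.lookup q u0"
      by (cases "s0 \<in> Poly_Mapping.keys p") (simp_all add: in_keys_iff)
    finally show ?thesis using Node by simp
  qed
  finally show ?thesis .
qed

lemma lookup_mag_mult_Node[simp]: "Poly_Mapping.lookup (mag_mult p q) (Node s u) = Poly_Mapping.lookup p s * Poly_Mapping.lookup q u"
  and lookup_mag_mult_Leaf[simp]: "Poly_Mapping.lookup (mag_mult p q) (Leaf x) = 0"
  by (simp_all add: lookup_mag_mult)


lemma pm_eq: "(\<And>t. Poly_Mapping.lookup a t = Poly_Mapping.lookup b t) \<Longrightarrow> a = b"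
  by (rule poly_mapping_eqI)

lemma mag_mult_add_left: "mag_mult (p + q) r = mag_mult p r + mag_mult q r"
  by (rule poly_mapping_eqI) (auto simp: lookup_mag_mult lookup_add algebra_simps split: ftree.split)
lemma mag_mult_add_right: "mag_mult r (p + q) = mag_mult r p + mag_mult r q"
  by (rule poly_mapping_eqI) (auto simp: lookup_mag_mult lookup_add algebra_simps split: ftree.split)
lemma mag_mult_diff_left: "mag_mult (p - q) r = mag_mult p r - mag_mult q r"
  by (rule poly_mapping_eqI) (auto simp: lookup_mag_mult lookup_minus algebra_simps split: ftree.split)
lemma mag_mult_diff_right: "mag_mult r (p - q) = mag_mult r p - mag_mult r q"
  by (rule poly_mapping_eqI) (auto simp: lookup_mag_mult lookup_minus algebra_simps split: ftree.split)
lemma mag_mult_zero[simp]: "mag_mult 0 r = 0" "mag_mult r 0 = 0"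
  by (rule poly_mapping_eqI, simp add: lookup_mag_mult split: ftree.split)+
lemma mag_mult_smult_left: "mag_mult (mag_smult c p) r = mag_smult c (mag_mult p r)"
  by (rule poly_mapping_eqI) (auto simp: lookup_mag_mult algebra_simps split: ftree.split)
lemma mag_mult_smult_right: "mag_mult r (mag_smult c p) = mag_smult c (mag_mult r p)"
  by (rule poly_mapping_eqI) (auto simp: lookup_mag_mult algebra_simps split: ftree.split)
lemma smult_add: "mag_smult c (p + q) = mag_smult c p + mag_smult c q"
  by (rule poly_mapping_eqI) (simp add: lookup_add algebra_simps)
lemma smult_diff: "mag_smult c (p - q) = mag_smult c p - mag_smult c q"
  by (rule poly_mapping_eqI) (simp add: lookup_minus algebra_simps)
lemma smult_add_left: "mag_smult (a + b) p = mag_smult a p + mag_smult b p"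
  by (rule poly_mapping_eqI) (simp add: lookup_add algebra_simps)
lemma smult_smult[simp]: "mag_smult a (mag_smult b p) = mag_smult (a * b) p"
  by (rule poly_mapping_eqI) (simp add: algebra_simps)
lemma smult_one[simp]: "mag_smult 1 p = p"
  by (rule poly_mapping_eqI) simp
lemma smult_zero[simp]: "mag_smult 0 p = 0" "mag_smult c 0 = 0"
  by (rule poly_mapping_eqI, simp)+
lemma smult_minus_one: "mag_smult (-1) p = - p"
  by (rule poly_mapping_eqI) simp
lemma smult_neg: "mag_smult (- c) p = - mag_smult c p"
  by (rule poly_mapping_eqI) simp
lemma smult_uminus: "mag_smult c (- p) = - mag_smult c p"
  by (rule poly_mapping_eqI) simp
lemma mag_mult_neg: "mag_mult (- p) q = - mag_mult p q" "mag_mult q (- p) = - mag_mult q p"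
  by (rule poly_mapping_eqI, simp add: lookup_mag_mult split: ftree.split)+
lemma single_smult: "Poly_Mapping.single s c = mag_smult c (basis_el s)"
  by (rule poly_mapping_eqI) (simp add: lookup_basis_el lookup_single when_def)
lemma mag_mult_basis: "mag_mult (basis_el s) (basis_el u) = basis_el (Node s u)"
  by (rule poly_mapping_eqI) (auto simp: lookup_mag_mult lookup_basis_el split: ftree.split)

definition wmap :: "('x ftree \<Rightarrow> 'k::comm_ring_1) \<Rightarrow> ('x ftree \<Rightarrow>\<^sub>0 'k) \<Rightarrow> ('x ftree \<Rightarrow>\<^sub>0 'k)" where
  "wmap w p = (\<Sum>s\<in>Poly_Mapping.keys p. Poly_Mapping.single s (w s * Poly_Mapping.lookup p s))"

lemma lookup_wmap[simp]: "Poly_Mapping.lookup (wmap w p) t = w t * Poly_Mapping.lookup p t"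
  unfolding wmap_def by (simp add: lookup_sum_single in_keys_iff)

lemma wmap_add: "wmap w (p + q) = wmap w p + wmap w q"
  by (rule poly_mapping_eqI) (simp add: lookup_add algebra_simps)
lemma wmap_smult: "wmap w (mag_smult c p) = mag_smult c (wmap w p)"
  by (rule poly_mapping_eqI) (simp add: algebra_simps)
lemma wmap_basis: "wmap w (basis_el s) = mag_smult (w s) (basis_el s)"
  by (rule poly_mapping_eqI) (simp add: lookup_basis_el)
lemma wmap_zero[simp]: "wmap w 0 = 0"
  by (rule poly_mapping_eqI) simp
lemma wmap_diff: "wmap w (p - q) = wmap w p - wmap w q"
  by (rule poly_mapping_eqI) (simp add: lookup_minus algebra_simps)

lemma homog_iff: "a \<in> homog n \<longleftrightarrow> (\<forall>t. tdeg t \<noteq> n \<longrightarrow> Poly_Mapping.lookup a t = 0)"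
  unfolding homog_def by (auto simp: in_keys_iff)

lemma homog_wmap: "a \<in> homog n \<Longrightarrow> (\<And>t. tdeg t = n \<Longrightarrow> w t = c) \<Longrightarrow> wmap w a = mag_smult c a"
  by (rule poly_mapping_eqI) (metis homog_iff lookup_mag_smult lookup_wmap mult_zero_right)

lemma homog_add: "a \<in> homog n \<Longrightarrow> b \<in> homog n \<Longrightarrow> a + b \<in> homog n"
  by (simp add: homog_iff lookup_add)
lemma homog_diff: "a \<in> homog n \<Longrightarrow> b \<in> homog n \<Longrightarrow> a - b \<in> homog n"
  by (simp add: homog_iff lookup_minus)
lemma homog_smult: "a \<in> homog n \<Longrightarrow> mag_smult c a \<in> homog n"
  by (simp add: homog_iff)
lemma homog_zero: "0 \<in> homog n"
  by (simp add: homog_iff)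
lemma homog_basis: "basis_el t \<in> homog (tdeg t)"
  by (simp add: homog_iff lookup_basis_el)
lemma homog_mult: "a \<in> homog n \<Longrightarrow> b \<in> homog m \<Longrightarrow> mag_mult a b \<in> homog (n + m)"
  unfolding homog_iff
proof (intro allI impI)
  fix t :: "('a + 'b) ftree"
  assume a: "\<forall>t. tdeg t \<noteq> n \<longrightarrow> Poly_Mapping.lookup a t = 0" and b: "\<forall>t. tdeg t \<noteq> m \<longrightarrow> Poly_Mapping.lookup b t = 0"
    and t: "tdeg t \<noteq> n + m"
  show "Poly_Mapping.lookup (mag_mult a b) t = 0"
  proof (cases t)
    case (Node s u)
    then have "tdeg s \<noteq> n \<or> tdeg u \<noteq> m" using t by auto
    then show ?thesis using a b Node by auto
  qed simp
qed

lemma hpart_homog: "a \<in> homog k \<Longrightarrow> hpart n a = (if n = k then a else 0)"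
  by (rule poly_mapping_eqI) (auto simp: homog_iff)


lemma ig_diff: "a \<in> ideal_gen R \<Longrightarrow> b \<in> ideal_gen R \<Longrightarrow> a - b \<in> ideal_gen R"
proof -
  assume a: "a \<in> ideal_gen R" and b: "b \<in> ideal_gen R"
  have "mag_smult (-1) b \<in> ideal_gen R" using b by (rule ideal_gen.smult)
  then have "a + mag_smult (-1) b \<in> ideal_gen R" using a by (simp add: ideal_gen.add)
  then show ?thesis by (simp add: smult_minus_one)
qed

lemma ig_neg: "a \<in> ideal_gen R \<Longrightarrow> - a \<in> ideal_gen R"
  using ig_diff[OF ideal_gen.zero] by fastforce

lemma ig_sum: "finite A \<Longrightarrow> (\<And>x. x \<in> A \<Longrightarrow> f x \<in> ideal_gen R) \<Longrightarrow> sum f A \<in> ideal_gen R"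
  by (induction A rule: finite_induct) (auto intro: ideal_gen.intros)

lemma smult_sum: "mag_smult c (sum f A) = (\<Sum>x\<in>A. mag_smult c (f x))"
  by (induction A rule: infinite_finite_induct) (auto simp: smult_add)

lemma mag_mult_sum_left: "mag_mult (sum f A) q = (\<Sum>x\<in>A. mag_mult (f x) q)"
  by (induction A rule: infinite_finite_induct) (auto simp: mag_mult_add_left)

definition sig :: "(('g + 'm) ftree \<Rightarrow>\<^sub>0 'k::comm_ring_1) \<Rightarrow> (('g + 'm) ftree \<Rightarrow>\<^sub>0 'k)" where
  "sig = wmap (\<lambda>t. (-1) ^ tdeg t)"

lemma lookup_sig[simp]: "Poly_Mapping.lookup (sig p) t = (-1) ^ tdeg t * Poly_Mapping.lookup p t"
  by (simp add: sig_def)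

lemma sig_mult: "sig (mag_mult p q) = mag_mult (sig p) (sig q)"
  by (rule poly_mapping_eqI) (auto simp: lookup_mag_mult power_add algebra_simps split: ftree.split)

lemma sig_sig[simp]: "sig (sig p) = p"
  by (rule poly_mapping_eqI) (simp flip: mult.assoc power_add add: mult_2[symmetric] power_mult)

lemma sig_add: "sig (p + q) = sig p + sig q" by (simp add: sig_def wmap_add)
lemma sig_smult: "sig (mag_smult c p) = mag_smult c (sig p)" by (simp add: sig_def wmap_smult)
lemma sig_basis: "sig (basis_el s) = mag_smult ((-1) ^ tdeg s) (basis_el s)" by (simp add: sig_def wmap_basis)
lemma sig_zero[simp]: "sig 0 = 0" by (simp add: sig_def)
lemma sig_homog: "a \<in> homog n \<Longrightarrow> sig a = mag_smult ((-1)^n) a"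
  unfolding sig_def by (rule homog_wmap) auto

lemma ideal_sig:
  assumes hom: "\<And>r. r \<in> R \<Longrightarrow> \<exists>k. r \<in> homog k"
  shows "a \<in> ideal_gen R \<Longrightarrow> sig a \<in> ideal_gen R"
proof (induction rule: ideal_gen.induct)
  case (gen r)
  then obtain k where "r \<in> homog k" using hom by blast
  then show ?case using gen by (auto simp: sig_homog intro: ideal_gen.intros)
next
  case zero then show ?case by (simp add: ideal_gen.zero)
next
  case (add a b) then show ?case by (simp add: sig_add ideal_gen.add)
next
  case (smult a c) then show ?case by (simp add: sig_smult ideal_gen.smult)
next
  case (left a p) then show ?case by (simp add: sig_mult ideal_gen.left)
next
  case (right a p) then show ?case by (simp add: sig_mult ideal_gen.right)
qed

lemma hpart_add: "hpart n (a + b) = hpart n a + hpart n b"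
  by (rule poly_mapping_eqI) (simp add: lookup_add)
lemma hpart_smult: "hpart n (mag_smult c a) = mag_smult c (hpart n a)"
  by (rule poly_mapping_eqI) simp
lemma hpart_zero[simp]: "hpart n 0 = 0"
  by (rule poly_mapping_eqI) simp

lemma hpart_mult: "hpart n (mag_mult p a) = (\<Sum>j\<in>{..n}. mag_mult (hpart (n - j) p) (hpart j a))"
proof (rule poly_mapping_eqI)
  fix t :: "('a + 'b) ftree"
  show "Poly_Mapping.lookup (hpart n (mag_mult p a)) t = Poly_Mapping.lookup (\<Sum>j\<in>{..n}. mag_mult (hpart (n - j) p) (hpart j a)) t"
  proof (cases t)
    case (Leaf x) then show ?thesis by (simp add: lookup_sum)
  next
    case (Node s u)
    have "Poly_Mapping.lookup (\<Sum>j\<in>{..n}. mag_mult (hpart (n - j) p) (hpart j a)) t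
      = (\<Sum>j\<in>{..n}. if j = tdeg u then (if tdeg s + tdeg u = n then Poly_Mapping.lookup p s * Poly_Mapping.lookup a u else 0) else 0)"
      unfolding lookup_sum Node by (rule sum.cong) auto
    also have "\<dots> = Poly_Mapping.lookup (hpart n (mag_mult p a)) t"
      by (simp add: Node)
    finally show ?thesis by simp
  qed
qed

lemma ideal_graded:
  assumes hom: "\<And>r. r \<in> R \<Longrightarrow> \<exists>k. r \<in> homog k"
  shows "a \<in> ideal_gen R \<Longrightarrow> \<forall>n. hpart n a \<in> ideal_gen R"
proof (induction rule: ideal_gen.induct)
  case (gen r)
  then obtain k where "r \<in> homog k" using hom by blast
  then show ?case using gen by (auto simp: hpart_homog intro: ideal_gen.intros)
next
  case zero then show ?case by (simp add: ideal_gen.zero)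
next
  case (add a b) then show ?case by (simp add: hpart_add ideal_gen.add)
next
  case (smult a c) then show ?case by (simp add: hpart_smult ideal_gen.smult)
next
  case (left a p) then show ?case by (auto simp: hpart_mult intro!: ig_sum ideal_gen.left)
next
  case (right a p)
  have "hpart n (mag_mult a p) = (\<Sum>j\<in>{..n}. mag_mult (hpart (n - j) a) (hpart j p))" for n
    by (rule hpart_mult)
  then show ?case using right by (auto intro!: ig_sum ideal_gen.right)
qed

lemma Dmag_on: "finite S \<Longrightarrow> Poly_Mapping.keys p \<subseteq> S \<Longrightarrow>
  Dmag d p = (\<Sum>s\<in>S. mag_smult (Poly_Mapping.lookup p s) (Dtree d s))"
  unfolding Dmag_def by (rule sum.mono_neutral_left) (auto simp: in_keys_iff)

lemma Dmag_add: "Dmag d (p + q) = Dmag d p + Dmag d q"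
proof -
  let ?S = "Poly_Mapping.keys p \<union> Poly_Mapping.keys q"
  have f: "finite ?S" by simp
  have "Poly_Mapping.keys (p + q) \<subseteq> ?S" by (rule keys_add)
  then show ?thesis
    by (simp add: Dmag_on[OF f] lookup_add smult_add_left sum.distrib)
qed

lemma Dmag_smult: "Dmag d (mag_smult c p) = mag_smult c (Dmag d p)"
proof -
  have "Poly_Mapping.keys (mag_smult c p) \<subseteq> Poly_Mapping.keys p" by (auto simp: in_keys_iff)
  then have "Dmag d (mag_smult c p) = (\<Sum>s\<in>Poly_Mapping.keys p. mag_smult (c * Poly_Mapping.lookup p s) (Dtree d s))"
    by (simp add: Dmag_on[OF finite_keys])
  also have "\<dots> = mag_smult c (Dmag d p)" by (simp add: Dmag_def smult_sum)
  finally show ?thesis .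
qed

lemma Dmag_basis: "Dmag d (basis_el s) = Dtree d s"
proof -
  have "Poly_Mapping.keys (basis_el s :: ('a + 'b) ftree \<Rightarrow>\<^sub>0 'c) \<subseteq> {s}" by (auto simp: in_keys_iff lookup_basis_el split: if_splits)
  then show ?thesis by (simp add: Dmag_on[of "{s}"] lookup_basis_el)
qed

lemma Dmag_zero[simp]: "Dmag d 0 = 0" by (simp add: Dmag_def)

lemma Dmag_diff: "Dmag d (p - q) = Dmag d p - Dmag d q"
  using Dmag_add[of d "p - q" q] by simp

lemma Leibniz: "Dmag d (mag_mult p q) = mag_mult (Dmag d p) q + mag_mult (sig p) (Dmag d q)"
proof (induction p rule: pm_induct)
  case 1 then show ?case by simp
next
  case (2 s c)
  show ?case
  proof (induction q rule: pm_induct)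
    case 1 then show ?case by simp
  next
    case (2 u e)
    show ?case
      by (simp add: single_smult mag_mult_smult_left mag_mult_smult_right Dmag_smult Dmag_basis
          mag_mult_basis sig_smult sig_basis smult_add mult_ac)
  next
    case (3 a b) then show ?case
      by (simp add: mag_mult_add_right Dmag_add)
  qed
next
  case (3 a b) then show ?case
    by (simp add: mag_mult_add_left Dmag_add sig_add)
qed


lemma Dtree_props: fixes d :: "'m \<Rightarrow> 'g" and t :: "('g + 'm) ftree"
  shows "(Dtree d t :: ('g + 'm) ftree \<Rightarrow>\<^sub>0 'k::comm_ring_1) \<in> homog (tdeg t - 1) \<and> (tdeg t = 0 \<longrightarrow> (Dtree d t :: ('g + 'm) ftree \<Rightarrow>\<^sub>0 'k) = 0)"
proof (induction t)
  case (Leaf x)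
  then show ?case using homog_basis[of "Leaf (Inl _)"] by (cases x) (auto simp: homog_zero)
next
  case (Node s u)
  let ?e = "(-1) ^ tdeg s"
  have D: "Dtree d (Node s u) = mag_mult (Dtree d s) (basis_el u) + mag_smult ?e (mag_mult (basis_el s) (Dtree d u))"
    by simp
  have IHs: "(Dtree d s :: ('g + 'm) ftree \<Rightarrow>\<^sub>0 'k) \<in> homog (tdeg s - 1)" "tdeg s = 0 \<Longrightarrow> (Dtree d s :: ('g + 'm) ftree \<Rightarrow>\<^sub>0 'k) = 0" using Node.IH(1) by auto
  have IHu: "(Dtree d u :: ('g + 'm) ftree \<Rightarrow>\<^sub>0 'k) \<in> homog (tdeg u - 1)" "tdeg u = 0 \<Longrightarrow> (Dtree d u :: ('g + 'm) ftree \<Rightarrow>\<^sub>0 'k) = 0" using Node.IH(2) by auto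
  have h1: "mag_mult ((Dtree d s :: ('g + 'm) ftree \<Rightarrow>\<^sub>0 'k)) (basis_el u) \<in> homog ((tdeg s - 1) + tdeg u)"
    using IHs(1) homog_basis homog_mult by blast
  have h2: "mag_smult ?e (mag_mult (basis_el s) ((Dtree d u :: ('g + 'm) ftree \<Rightarrow>\<^sub>0 'k))) \<in> homog (tdeg s + (tdeg u - 1))"
    using IHu(1) homog_basis homog_mult homog_smult by blast
  show ?case
  proof (cases "tdeg s = 0")
    case True
    then have z: "(Dtree d s :: ('g + 'm) ftree \<Rightarrow>\<^sub>0 'k) = 0" by (rule IHs(2))
    have "(Dtree d (Node s u) :: ('g + 'm) ftree \<Rightarrow>\<^sub>0 'k) = mag_smult ?e (mag_mult (basis_el s) ((Dtree d u :: ('g + 'm) ftree \<Rightarrow>\<^sub>0 'k)))"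
      by (simp add: z)
    moreover have "tdeg s + (tdeg u - 1) = tdeg (Node s u) - 1" using True by simp
    moreover have "tdeg (Node s u) = 0 \<Longrightarrow> (Dtree d (Node s u) :: ('g + 'm) ftree \<Rightarrow>\<^sub>0 'k) = 0"
      using True IHu(2) z by simp
    ultimately show ?thesis using h2 by simp
  next
    case False
    show ?thesis
    proof (cases "tdeg u = 0")
      case True
      then have z: "(Dtree d u :: ('g + 'm) ftree \<Rightarrow>\<^sub>0 'k) = 0" by (rule IHu(2))
      have "(Dtree d (Node s u) :: ('g + 'm) ftree \<Rightarrow>\<^sub>0 'k) = mag_mult ((Dtree d s :: ('g + 'm) ftree \<Rightarrow>\<^sub>0 'k)) (basis_el u)"
        by (simp add: z)
      moreover have "(tdeg s - 1) + tdeg u = tdeg (Node s u) - 1" using True by simp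
      ultimately show ?thesis using h1 False by simp
    next
      case F2: False
      have "(tdeg s - 1) + tdeg u = tdeg (Node s u) - 1" "tdeg s + (tdeg u - 1) = tdeg (Node s u) - 1"
        using False F2 by auto
      then show ?thesis using h1 h2 D False by (simp add: homog_add)
    qed
  qed
qed

lemma Dtree_homog: "Dtree d t \<in> homog (tdeg t - 1)"
  and Dtree_zero: "tdeg t = 0 \<Longrightarrow> Dtree d t = 0"
  using Dtree_props by blast+

lemma sig_Dtree: "sig (Dtree d t) = - mag_smult ((-1) ^ tdeg t) (Dtree d t)"
proof (cases "tdeg t")
  case 0 then show ?thesis by (simp add: Dtree_zero)
next
  case (Suc k)
  have "sig (Dtree d t) = mag_smult ((-1)^k) (Dtree d t)"
    using sig_homog[OF Dtree_homog[of d t]] Suc by simp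
  then show ?thesis using Suc by (simp add: smult_neg[symmetric])
qed

lemma sig_Dmag: "sig (Dmag d p) = - Dmag d (sig p)"
proof (induction p rule: pm_induct)
  case 1 then show ?case by simp
next
  case (2 s c) then show ?case
    by (simp add: single_smult Dmag_smult Dmag_basis sig_smult sig_basis sig_Dtree smult_uminus)
next
  case (3 a b) then show ?case by (simp add: sig_add Dmag_add)
qed

lemma D2_tree: fixes d :: "'m \<Rightarrow> 'g" shows "Dmag d (Dtree d t :: ('g + 'm) ftree \<Rightarrow>\<^sub>0 'k::comm_ring_1) = 0"
proof (induction t)
  case (Leaf x)
  then show ?case by (cases x) (simp_all add: Dmag_basis)
next
  case (Node s u)
  let ?e = "(-1) ^ tdeg s"
  have 1: "Dmag d (mag_mult (Dtree d s :: ('g + 'm) ftree \<Rightarrow>\<^sub>0 'k) (basis_el u)) = - mag_smult ?e (mag_mult (Dtree d s) (Dtree d u))"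
    unfolding Leibniz Node(1) Dmag_basis sig_Dtree by (simp add: mag_mult_neg mag_mult_smult_left)
  have 2: "Dmag d (mag_smult ?e (mag_mult (basis_el s) (Dtree d u :: ('g + 'm) ftree \<Rightarrow>\<^sub>0 'k))) = mag_smult ?e (mag_mult (Dtree d s) (Dtree d u))"
    unfolding Dmag_smult Leibniz Node(2) Dmag_basis by simp
  show ?case by (simp only: Dtree.simps Dmag_add 1 2) simp
qed

lemma D2: "Dmag d (Dmag d p) = 0"
proof (induction p rule: pm_induct)
  case 1 then show ?case by simp
next
  case (2 s c) then show ?case by (simp add: single_smult Dmag_smult Dmag_basis D2_tree)
next
  case (3 a b) then show ?case by (simp add: Dmag_add)
qed


definition tw :: "('g + 'm) ftree \<Rightarrow> 'k::comm_ring_1" where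
  "tw t = (case t of Node u s \<Rightarrow> (-1) ^ (tdeg u * tdeg s) | _ \<Rightarrow> 1)"
definition tw2 :: "('g + 'm) ftree \<Rightarrow> 'k::comm_ring_1" where
  "tw2 t = (case t of Node a (Node b c) \<Rightarrow> (-1) ^ (tdeg a * tdeg b) | _ \<Rightarrow> 1)"

definition Ant :: "(('g + 'm) ftree \<Rightarrow>\<^sub>0 'k::comm_ring_1) \<Rightarrow> _ \<Rightarrow> _" where
  "Ant p q = mag_mult p q + wmap tw (mag_mult q p)"
definition Jac :: "(('g + 'm) ftree \<Rightarrow>\<^sub>0 'k::comm_ring_1) \<Rightarrow> _ \<Rightarrow> _ \<Rightarrow> _" where
  "Jac p q r = mag_mult p (mag_mult q r) - mag_mult (mag_mult p q) r - wmap tw2 (mag_mult q (mag_mult p r))"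

lemma Ant_add1: "Ant (a + b) q = Ant a q + Ant b q"
  by (simp add: Ant_def mag_mult_add_left mag_mult_add_right wmap_add)
lemma Ant_add2: "Ant q (a + b) = Ant q a + Ant q b"
  by (simp add: Ant_def mag_mult_add_left mag_mult_add_right wmap_add)
lemma Ant_smult1: "Ant (mag_smult c a) q = mag_smult c (Ant a q)"
  by (simp add: Ant_def mag_mult_smult_left mag_mult_smult_right wmap_smult smult_add)
lemma Ant_smult2: "Ant q (mag_smult c a) = mag_smult c (Ant q a)"
  by (simp add: Ant_def mag_mult_smult_left mag_mult_smult_right wmap_smult smult_add)
lemma Ant_zero: "Ant 0 q = 0" "Ant q 0 = 0" by (simp_all add: Ant_def)

lemma Jac_add1: "Jac (a + b) q r = Jac a q r + Jac b q r"
  by (simp add: Jac_def mag_mult_add_left mag_mult_add_right wmap_add)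
lemma Jac_add2: "Jac q (a + b) r = Jac q a r + Jac q b r"
  by (simp add: Jac_def mag_mult_add_left mag_mult_add_right wmap_add)
lemma Jac_add3: "Jac q r (a + b) = Jac q r a + Jac q r b"
  by (simp add: Jac_def mag_mult_add_left mag_mult_add_right wmap_add)
lemma Jac_smult1: "Jac (mag_smult c a) q r = mag_smult c (Jac a q r)"
  by (simp add: Jac_def mag_mult_smult_left mag_mult_smult_right wmap_smult smult_diff)
lemma Jac_smult2: "Jac q (mag_smult c a) r = mag_smult c (Jac q a r)"
  by (simp add: Jac_def mag_mult_smult_left mag_mult_smult_right wmap_smult smult_diff)
lemma Jac_smult3: "Jac q r (mag_smult c a) = mag_smult c (Jac q r a)"
  by (simp add: Jac_def mag_mult_smult_left mag_mult_smult_right wmap_smult smult_diff)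
lemma Jac_zero: "Jac 0 q r = 0" "Jac q 0 r = 0" "Jac q r 0 = 0" by (simp_all add: Jac_def)

lemma tw_homog: "(p :: ('a + 'b) ftree \<Rightarrow>\<^sub>0 'k::comm_ring_1) \<in> homog a \<Longrightarrow> q \<in> homog b \<Longrightarrow> wmap tw (mag_mult p q) = mag_smult ((-1) ^ (a * b)) (mag_mult p q)"
proof (rule poly_mapping_eqI)
  fix t :: "('a + 'b) ftree"
  assume p: "p \<in> homog a" and q: "q \<in> homog b"
  show "Poly_Mapping.lookup (wmap tw (mag_mult p q)) t = Poly_Mapping.lookup (mag_smult ((-1) ^ (a * b)) (mag_mult p q)) t"
  proof (cases t)
    case (Node x y)
    show ?thesis
    proof (cases "tdeg x = a \<and> tdeg y = b")
      case True then show ?thesis using Node by (simp add: tw_def)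
    next
      case False then show ?thesis using Node p q by (auto simp: homog_iff)
    qed
  qed simp
qed

lemma tw2_homog: "(p :: ('a + 'b) ftree \<Rightarrow>\<^sub>0 'k::comm_ring_1) \<in> homog a \<Longrightarrow> q \<in> homog b \<Longrightarrow> wmap tw2 (mag_mult p (mag_mult q r)) = mag_smult ((-1) ^ (a * b)) (mag_mult p (mag_mult q r))"
proof (rule poly_mapping_eqI)
  fix t :: "('a + 'b) ftree"
  assume p: "p \<in> homog a" and q: "q \<in> homog b"
  show "Poly_Mapping.lookup (wmap tw2 (mag_mult p (mag_mult q r))) t = Poly_Mapping.lookup (mag_smult ((-1) ^ (a * b)) (mag_mult p (mag_mult q r))) t"
  proof (cases t)
    case (Node x y)
    show ?thesis
    proof (cases y)
      case (Node y1 y2)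
      show ?thesis
      proof (cases "tdeg x = a \<and> tdeg y1 = b")
        case True then show ?thesis using Node \<open>t = _\<close> by (simp add: tw2_def)
      next
        case False then show ?thesis using Node \<open>t = _\<close> p q by (auto simp: homog_iff)
      qed
    qed (simp add: Node)
  qed simp
qed

lemma Ant_basis: "Ant (basis_el s) (basis_el u) = mag_mult (basis_el s) (basis_el u) + mag_smult ((-1) ^ (tdeg s * tdeg u)) (mag_mult (basis_el u) (basis_el s))"
  unfolding Ant_def by (simp add: tw_homog[OF homog_basis homog_basis] mult.commute)

lemma Jac_basis: "Jac (basis_el s) (basis_el t) (basis_el u) =
   mag_mult (basis_el s) (mag_mult (basis_el t) (basis_el u))
        - mag_mult (mag_mult (basis_el s) (basis_el t)) (basis_el u)
        - mag_smult ((-1) ^ (tdeg s * tdeg t)) (mag_mult (basis_el t) (mag_mult (basis_el s) (basis_el u)))"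
  unfolding Jac_def by (simp add: tw2_homog[OF homog_basis homog_basis] mult.commute)

lemma Ant_in:
  assumes "glie_rels \<subseteq> R"
  shows "Ant p q \<in> ideal_gen R"
proof (induction p rule: pm_induct)
  case 1 then show ?case by (simp add: Ant_zero ideal_gen.zero)
next
  case (2 s c)
  show ?case
  proof (induction q rule: pm_induct)
    case 1 then show ?case by (simp add: Ant_zero ideal_gen.zero)
  next
    case (2 u e)
    have "Ant (basis_el s) (basis_el u) \<in> glie_rels"
      unfolding Ant_basis glie_rels_def by blast
    then have "Ant (basis_el s) (basis_el u) \<in> ideal_gen R" using assms by (blast intro: ideal_gen.gen)
    then show ?case by (simp add: single_smult Ant_smult1 Ant_smult2 ideal_gen.smult)
  next
    case (3 a b) then show ?case by (simp add: Ant_add2 ideal_gen.add)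
  qed
next
  case (3 a b) then show ?case by (simp add: Ant_add1 ideal_gen.add)
qed

lemma Jac_in:
  assumes "glie_rels \<subseteq> R"
  shows "Jac p q r \<in> ideal_gen R"
proof (induction p rule: pm_induct)
  case 1 then show ?case by (simp add: Jac_zero ideal_gen.zero)
next
  case (2 s c)
  show ?case
  proof (induction q rule: pm_induct)
    case 1 then show ?case by (simp add: Jac_zero ideal_gen.zero)
  next
    case (2 t e)
    show ?case
    proof (induction r rule: pm_induct)
      case 1 then show ?case by (simp add: Jac_zero ideal_gen.zero)
    next
      case (2 u f)
      have "Jac (basis_el s) (basis_el t) (basis_el u) \<in> glie_rels"
        unfolding Jac_basis glie_rels_def by blast
      then have "Jac (basis_el s) (basis_el t) (basis_el u) \<in> ideal_gen R" using assms by (blast intro: ideal_gen.gen)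
      then show ?case by (simp add: single_smult Jac_smult1 Jac_smult2 Jac_smult3 ideal_gen.smult)
    next
      case (3 a b) then show ?case by (simp add: Jac_add3 ideal_gen.add)
    qed
  next
    case (3 a b) then show ?case by (simp add: Jac_add2 ideal_gen.add)
  qed
next
  case (3 a b) then show ?case by (simp add: Jac_add1 ideal_gen.add)
qed

lemma Ant_homog_in:
  assumes "glie_rels \<subseteq> R" "p \<in> homog a" "q \<in> homog b"
  shows "mag_mult p q + mag_smult ((-1) ^ (a * b)) (mag_mult q p) \<in> ideal_gen R"
  using Ant_in[OF assms(1), of p q] unfolding Ant_def
  by (simp add: tw_homog[OF assms(3,2)] mult.commute)

lemma Jac_homog_in:
  assumes "glie_rels \<subseteq> R" "p \<in> homog a" "q \<in> homog b"
  shows "mag_mult p (mag_mult q r) - mag_mult (mag_mult p q) r - mag_smult ((-1) ^ (a * b)) (mag_mult q (mag_mult p r)) \<in> ideal_gen R"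
  using Jac_in[OF assms(1), of p q r] unfolding Jac_def
  by (simp add: tw2_homog[OF assms(3,2)] mult.commute)


lemma neg1_sq: "(-1::'a::comm_ring_1) ^ n * (-1) ^ n = 1"
  by (simp flip: power_mult_distrib)

lemma signS1: "(-1::'a::comm_ring_1) ^ (Suc a * b) * (-1) ^ b = (-1) ^ (a * b)"
proof -
  have "(-1::'a) ^ (Suc a * b) * (-1) ^ b = ((-1) ^ b * (-1) ^ b) * (-1) ^ (a * b)"
    by (simp add: power_add mult_ac)
  then show ?thesis by (simp add: neg1_sq)
qed

lemma signS2: "(-1::'a::comm_ring_1) ^ a * (-1) ^ (a * b) = (-1) ^ (a * Suc b)"
  by (simp add: power_add)

lemma D_Ant_gen:
  fixes d :: "'m \<Rightarrow> 'g" and s u :: "('g + 'm) ftree"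
  assumes R: "glie_rels \<subseteq> R"
  shows "Dmag d (mag_mult (basis_el s) (basis_el u)
        + mag_smult ((-1) ^ (tdeg s * tdeg u)) (mag_mult (basis_el u) (basis_el s)) :: ('g + 'm) ftree \<Rightarrow>\<^sub>0 'k::comm_ring_1)
     \<in> ideal_gen R"
proof -
  define bs where "bs = (basis_el s :: ('g + 'm) ftree \<Rightarrow>\<^sub>0 'k)"
  define bu where "bu = (basis_el u :: ('g + 'm) ftree \<Rightarrow>\<^sub>0 'k)"
  define Ds where "Ds = (Dtree d s :: ('g + 'm) ftree \<Rightarrow>\<^sub>0 'k)"
  define Du where "Du = (Dtree d u :: ('g + 'm) ftree \<Rightarrow>\<^sub>0 'k)"
  define a where "a = tdeg s"
  define b where "b = tdeg u"
  define e :: 'k where "e = (-1) ^ (a * b)"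
  define X where "X = mag_mult Ds bu + mag_smult (e * (-1) ^ b) (mag_mult bu Ds)"
  define Y where "Y = mag_smult ((-1) ^ a) (mag_mult bs Du) + mag_smult e (mag_mult Du bs)"
  have eq: "Dmag d (mag_mult bs bu + mag_smult e (mag_mult bu bs)) = X + Y"
    unfolding X_def Y_def Dmag_add Dmag_smult Leibniz bs_def bu_def Ds_def Du_def
    by (simp add: Dmag_basis sig_basis a_def b_def mag_mult_smult_left mag_mult_smult_right smult_add add_ac mult_ac)
  have X: "X \<in> ideal_gen R"
  proof (cases a)
    case 0
    then have "Ds = 0" unfolding Ds_def a_def by (simp add: Dtree_zero)
    then show ?thesis by (simp add: X_def ideal_gen.zero)
  next
    case (Suc a')
    have "Ds \<in> homog a'" using Dtree_homog[of d s] Suc unfolding Ds_def a_def by simp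
    moreover have "bu \<in> homog b" unfolding bu_def b_def by (rule homog_basis)
    moreover have "e * (-1) ^ b = (-1) ^ (a' * b)" unfolding e_def Suc by (rule signS1)
    ultimately show ?thesis using Ant_homog_in[OF R] unfolding X_def by simp
  qed
  have Y: "Y \<in> ideal_gen R"
  proof (cases b)
    case 0
    then have "Du = 0" unfolding Du_def b_def by (simp add: Dtree_zero)
    then show ?thesis by (simp add: Y_def ideal_gen.zero)
  next
    case (Suc b')
    have "Du \<in> homog b'" using Dtree_homog[of d u] Suc unfolding Du_def b_def by simp
    moreover have "bs \<in> homog a" unfolding bs_def a_def by (rule homog_basis)
    ultimately have "mag_mult bs Du + mag_smult ((-1) ^ (a * b')) (mag_mult Du bs) \<in> ideal_gen R"
      using Ant_homog_in[OF R] by blast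
    then have "mag_smult ((-1) ^ a) (mag_mult bs Du + mag_smult ((-1) ^ (a * b')) (mag_mult Du bs)) \<in> ideal_gen R"
      by (rule ideal_gen.smult)
    moreover have "(-1) ^ a * (-1) ^ (a * b') = e" unfolding e_def Suc by (rule signS2)
    ultimately show ?thesis unfolding Y_def by (simp add: smult_add)
  qed
  show ?thesis using eq X Y unfolding bs_def bu_def e_def a_def b_def by (simp add: ideal_gen.add)
qed

lemma D_Jac_gen:
  fixes d :: "'m \<Rightarrow> 'g" and s t u :: "('g + 'm) ftree"
  assumes R: "glie_rels \<subseteq> R"
  shows "Dmag d (mag_mult (basis_el s) (mag_mult (basis_el t) (basis_el u))
        - mag_mult (mag_mult (basis_el s) (basis_el t)) (basis_el u)
        - mag_smult ((-1) ^ (tdeg s * tdeg t)) (mag_mult (basis_el t) (mag_mult (basis_el s) (basis_el u))) :: ('g + 'm) ftree \<Rightarrow>\<^sub>0 'k::comm_ring_1)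
     \<in> ideal_gen R"
proof -
  define bs where "bs = (basis_el s :: ('g + 'm) ftree \<Rightarrow>\<^sub>0 'k)"
  define bt where "bt = (basis_el t :: ('g + 'm) ftree \<Rightarrow>\<^sub>0 'k)"
  define bu where "bu = (basis_el u :: ('g + 'm) ftree \<Rightarrow>\<^sub>0 'k)"
  define Ds where "Ds = (Dtree d s :: ('g + 'm) ftree \<Rightarrow>\<^sub>0 'k)"
  define Dt where "Dt = (Dtree d t :: ('g + 'm) ftree \<Rightarrow>\<^sub>0 'k)"
  define Du where "Du = (Dtree d u :: ('g + 'm) ftree \<Rightarrow>\<^sub>0 'k)"
  define a where "a = tdeg s"
  define b where "b = tdeg t"
  define e :: 'k where "e = (-1) ^ (a * b)"
  define sa :: 'k where "sa = (-1) ^ a"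
  define sb :: 'k where "sb = (-1) ^ b"
  define X where "X = mag_mult Ds (mag_mult bt bu) - mag_mult (mag_mult Ds bt) bu - mag_smult (e * sb) (mag_mult bt (mag_mult Ds bu))"
  define Y where "Y = mag_smult sa (mag_mult bs (mag_mult Dt bu)) - mag_smult sa (mag_mult (mag_mult bs Dt) bu) - mag_smult e (mag_mult Dt (mag_mult bs bu))"
  define Z where "Z = mag_smult (sa * sb) (mag_mult bs (mag_mult bt Du) - mag_mult (mag_mult bs bt) Du - mag_smult e (mag_mult bt (mag_mult bs Du)))"
  have eq: "Dmag d (mag_mult bs (mag_mult bt bu) - mag_mult (mag_mult bs bt) bu - mag_smult e (mag_mult bt (mag_mult bs bu))) = X + Y + Z"
    unfolding X_def Y_def Z_def Dmag_diff Dmag_smult Leibniz bs_def bt_def bu_def Ds_def Dt_def Du_def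
    by (simp add: Dmag_basis sig_basis sig_mult sig_smult a_def b_def sa_def sb_def mag_mult_smult_left mag_mult_smult_right
        mag_mult_add_left mag_mult_add_right smult_add smult_diff algebra_simps)
  have X: "X \<in> ideal_gen R"
  proof (cases a)
    case 0
    then have "Ds = 0" unfolding Ds_def a_def by (simp add: Dtree_zero)
    then show ?thesis by (simp add: X_def ideal_gen.zero)
  next
    case (Suc a')
    have "Ds \<in> homog a'" using Dtree_homog[of d s] Suc unfolding Ds_def a_def by simp
    moreover have "bt \<in> homog b" unfolding bt_def b_def by (rule homog_basis)
    moreover have "e * sb = (-1) ^ (a' * b)" unfolding e_def sb_def Suc by (rule signS1)
    ultimately show ?thesis using Jac_homog_in[OF R] unfolding X_def by simp
  qed
  have Y: "Y \<in> ideal_gen R"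
  proof (cases b)
    case 0
    then have "Dt = 0" unfolding Dt_def b_def by (simp add: Dtree_zero)
    then show ?thesis by (simp add: Y_def ideal_gen.zero)
  next
    case (Suc b')
    have "Dt \<in> homog b'" using Dtree_homog[of d t] Suc unfolding Dt_def b_def by simp
    moreover have "bs \<in> homog a" unfolding bs_def a_def by (rule homog_basis)
    ultimately have "mag_mult bs (mag_mult Dt bu) - mag_mult (mag_mult bs Dt) bu - mag_smult ((-1) ^ (a * b')) (mag_mult Dt (mag_mult bs bu)) \<in> ideal_gen R"
      using Jac_homog_in[OF R] by blast
    then have "mag_smult sa (mag_mult bs (mag_mult Dt bu) - mag_mult (mag_mult bs Dt) bu - mag_smult ((-1) ^ (a * b')) (mag_mult Dt (mag_mult bs bu))) \<in> ideal_gen R"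
      by (rule ideal_gen.smult)
    moreover have "sa * (-1) ^ (a * b') = e" unfolding e_def sa_def Suc by (rule signS2)
    ultimately show ?thesis unfolding Y_def by (simp add: smult_diff)
  qed
  have Z: "Z \<in> ideal_gen R"
  proof -
    have "bs \<in> homog a" unfolding bs_def a_def by (rule homog_basis)
    moreover have "bt \<in> homog b" unfolding bt_def b_def by (rule homog_basis)
    ultimately show ?thesis using Jac_homog_in[OF R] unfolding Z_def e_def by (blast intro: ideal_gen.smult)
  qed
  show ?thesis using eq X Y Z unfolding bs_def bt_def bu_def e_def a_def b_def by (simp add: ideal_gen.add)
qed


lemma lin_add: "Vector_Spaces.linear s1 s2 f \<Longrightarrow> f (x + y) = f x + f y"
  unfolding Vector_Spaces.linear_def module_hom_def module_hom_axioms_def by blast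
lemma lin_scale: "Vector_Spaces.linear s1 s2 f \<Longrightarrow> f (s1 c x) = s2 c (f x)"
  unfolding Vector_Spaces.linear_def module_hom_def module_hom_axioms_def by blast
lemma lin_zero: "Vector_Spaces.linear s1 s2 f \<Longrightarrow> f 0 = 0"
  using lin_add[of s1 s2 f 0 0] by simp
lemma lin_diff: "Vector_Spaces.linear s1 s2 f \<Longrightarrow> f (x - y) = f x - f y"
  using lin_add[of s1 s2 f "x - y" y] by (simp add: algebra_simps)
lemma lin_vs: "Vector_Spaces.linear s1 s2 f \<Longrightarrow> vector_space s2"
  unfolding Vector_Spaces.linear_def by blast

fun ev0 :: "('g \<Rightarrow> 'g \<Rightarrow> 'g) \<Rightarrow> ('g::ab_group_add + 'm) ftree \<Rightarrow> 'g" where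
  "ev0 br (Leaf (Inl x)) = x"
| "ev0 br (Leaf (Inr m)) = 0"
| "ev0 br (Node s u) = br (ev0 br s) (ev0 br u)"

fun ev1 :: "('g \<Rightarrow> 'g \<Rightarrow> 'g) \<Rightarrow> ('m \<Rightarrow> 'g \<Rightarrow> 'm) \<Rightarrow> ('g::ab_group_add + 'm::ab_group_add) ftree \<Rightarrow> 'm" where
  "ev1 br act (Leaf (Inl x)) = 0"
| "ev1 br act (Leaf (Inr m)) = m"
| "ev1 br act (Node s u) = act (ev1 br act s) (ev0 br u) - act (ev1 br act u) (ev0 br s)"

definition Phi0 :: "('k::field \<Rightarrow> 'g::ab_group_add \<Rightarrow> 'g) \<Rightarrow> ('g \<Rightarrow> 'g \<Rightarrow> 'g) \<Rightarrow> (('g + 'm) ftree \<Rightarrow>\<^sub>0 'k) \<Rightarrow> 'g" where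
  "Phi0 sg br p = (\<Sum>s\<in>Poly_Mapping.keys p. sg (Poly_Mapping.lookup p s) (ev0 br s))"

definition Phi1 :: "('k::field \<Rightarrow> 'm::ab_group_add \<Rightarrow> 'm) \<Rightarrow> ('g::ab_group_add \<Rightarrow> 'g \<Rightarrow> 'g) \<Rightarrow> ('m \<Rightarrow> 'g \<Rightarrow> 'm) \<Rightarrow> (('g + 'm) ftree \<Rightarrow>\<^sub>0 'k) \<Rightarrow> 'm" where
  "Phi1 sm br act p = (\<Sum>s\<in>Poly_Mapping.keys p. sm (Poly_Mapping.lookup p s) (ev1 br act s))"

locale LMctx =
  fixes sg :: "'k::field_char_0 \<Rightarrow> 'g::ab_group_add \<Rightarrow> 'g"
    and sm :: "'k \<Rightarrow> 'm::ab_group_add \<Rightarrow> 'm"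
    and br :: "'g \<Rightarrow> 'g \<Rightarrow> 'g"
    and act :: "'m \<Rightarrow> 'g \<Rightarrow> 'm"
    and d :: "'m \<Rightarrow> 'g"
  assumes LM: "LM_lie_algebra sg sm br act d"
begin

lemma vsg: "module sg" and vsm: "module sm"
  using LM unfolding LM_lie_algebra_def module_iff_vector_space by blast+

lemma linbr2: "Vector_Spaces.linear sg sg (br x)" and linbr1: "Vector_Spaces.linear sg sg (\<lambda>x. br x y)"
  and linact2: "Vector_Spaces.linear sg sm (act m)" and linact1: "Vector_Spaces.linear sm sm (\<lambda>m. act m y)"
  and lind: "Vector_Spaces.linear sm sg d"
  using LM unfolding LM_lie_algebra_def bilinear_map_def by blast+

lemma br_alt: "br x x = 0" and br_jac: "br x (br y z) + br y (br z x) + br z (br x y) = 0"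
  and act_br: "act m (br x y) = act (act m x) y - act (act m y) x"
  and d_act: "d (act m x) = br (d m) x"
  using LM unfolding LM_lie_algebra_def by blast+

lemma br_add1: "br (x + y) z = br x z + br y z" using lin_add[OF linbr1] by blast
lemma br_add2: "br z (x + y) = br z x + br z y" using lin_add[OF linbr2] by blast
lemma br_sc1: "br (sg c x) z = sg c (br x z)" using lin_scale[OF linbr1] by blast
lemma br_sc2: "br z (sg c x) = sg c (br z x)" using lin_scale[OF linbr2] by blast
lemma br_0[simp]: "br 0 z = 0" "br z 0 = 0" using lin_zero[OF linbr1] lin_zero[OF linbr2] by blast+
lemma br_diff1: "br (x - y) z = br x z - br y z" using lin_diff[OF linbr1] by blast
lemma br_diff2: "br z (x - y) = br z x - br z y" using lin_diff[OF linbr2] by blast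
lemma act_add1: "act (x + y) z = act x z + act y z" using lin_add[OF linact1] by blast
lemma act_add2: "act z (x + y) = act z x + act z y" using lin_add[OF linact2] by blast
lemma act_sc1: "act (sm c x) z = sm c (act x z)" using lin_scale[OF linact1] by blast
lemma act_sc2: "act z (sg c x) = sm c (act z x)" using lin_scale[OF linact2] by blast
lemma act_0[simp]: "act 0 z = 0" "act m 0 = 0" using lin_zero[OF linact1] lin_zero[OF linact2] by blast+
lemma act_diff1: "act (x - y) z = act x z - act y z" using lin_diff[OF linact1] by blast
lemma act_diff2: "act z (x - y) = act z x - act z y" using lin_diff[OF linact2] by blast

lemma br_anti: "br y x = - br x y"
proof -
  have "br (x + y) (x + y) = 0" by (rule br_alt)
  then have "br x x + br x y + (br y x + br y y) = 0" by (simp add: br_add1 br_add2 add_ac)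
  then have "br x y + br y x = 0" by (simp add: br_alt)
  then show ?thesis by (simp add: eq_neg_iff_add_eq_0 add.commute)
qed

lemma sg_simps[simp]: "sg 1 x = x" "sg 0 x = 0" "sg c 0 = 0" "sg (-1) x = - x"
  using module.scale_one[OF vsg] module.scale_zero_left[OF vsg] module.scale_zero_right[OF vsg]
    module.scale_minus_left[OF vsg, of 1] by auto
lemma sm_simps[simp]: "sm 1 x = x" "sm 0 x = 0" "sm c 0 = 0" "sm (-1) x = - x"
  using module.scale_one[OF vsm] module.scale_zero_left[OF vsm] module.scale_zero_right[OF vsm]
    module.scale_minus_left[OF vsm, of 1] by auto

lemma ev0_deg: "tdeg t \<noteq> 0 \<Longrightarrow> ev0 br t = 0"
proof (induction t)
  case (Leaf x) then show ?case by (cases x) auto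
next
  case (Node s u)
  then show ?case by (cases "tdeg s = 0") auto
qed

lemma ev1_deg: "tdeg t \<noteq> 1 \<Longrightarrow> ev1 br act t = 0"
proof (induction t)
  case (Leaf x) then show ?case by (cases x) auto
next
  case (Node s u)
  have "act (ev1 br act s) (ev0 br u) = 0"
  proof (cases "tdeg s = 1")
    case True then have "tdeg u \<noteq> 0" using Node by simp
    then show ?thesis by (simp add: ev0_deg)
  qed (simp add: Node)
  moreover have "act (ev1 br act u) (ev0 br s) = 0"
  proof (cases "tdeg u = 1")
    case True then have "tdeg s \<noteq> 0" using Node by simp
    then show ?thesis by (simp add: ev0_deg)
  qed (simp add: Node)
  ultimately show ?case by simp
qed

end


context LMctx
begin

abbreviation P0 :: "(('g + 'm) ftree \<Rightarrow>\<^sub>0 'k) \<Rightarrow> 'g" where "P0 \<equiv> Phi0 sg br"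
abbreviation P1 :: "(('g + 'm) ftree \<Rightarrow>\<^sub>0 'k) \<Rightarrow> 'm" where "P1 \<equiv> Phi1 sm br act"
abbreviation e0 :: "('g + 'm) ftree \<Rightarrow> 'g" where "e0 \<equiv> ev0 br"
abbreviation e1 :: "('g + 'm) ftree \<Rightarrow> 'm" where "e1 \<equiv> ev1 br act"

lemma sg_add_left: "sg (a + b) x = sg a x + sg b x" by (rule module.scale_left_distrib[OF vsg])
lemma sm_add_left: "sm (a + b) x = sm a x + sm b x" by (rule module.scale_left_distrib[OF vsm])
lemma sg_sum: "sg c (sum f A) = (\<Sum>x\<in>A. sg c (f x))" by (rule module.scale_sum_right[OF vsg])
lemma sm_sum: "sm c (sum f A) = (\<Sum>x\<in>A. sm c (f x))" by (rule module.scale_sum_right[OF vsm])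
lemma sg_sg[simp]: "sg a (sg b x) = sg (a * b) x" by (rule module.scale_scale[OF vsg])
lemma sm_sm[simp]: "sm a (sm b x) = sm (a * b) x" by (rule module.scale_scale[OF vsm])
lemma sg_add: "sg c (x + y) = sg c x + sg c y" by (rule module.scale_right_distrib[OF vsg])
lemma sm_add: "sm c (x + y) = sm c x + sm c y" by (rule module.scale_right_distrib[OF vsm])
lemma sg_diff: "sg c (x - y) = sg c x - sg c y" by (rule module.scale_right_diff_distrib[OF vsg])
lemma sm_diff: "sm c (x - y) = sm c x - sm c y" by (rule module.scale_right_diff_distrib[OF vsm])

lemma P0_on: "finite S \<Longrightarrow> Poly_Mapping.keys p \<subseteq> S \<Longrightarrow> P0 p = (\<Sum>s\<in>S. sg (Poly_Mapping.lookup p s) (e0 s))"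
  unfolding Phi0_def by (rule sum.mono_neutral_left) (auto simp: in_keys_iff)
lemma P1_on: "finite S \<Longrightarrow> Poly_Mapping.keys p \<subseteq> S \<Longrightarrow> P1 p = (\<Sum>s\<in>S. sm (Poly_Mapping.lookup p s) (e1 s))"
  unfolding Phi1_def by (rule sum.mono_neutral_left) (auto simp: in_keys_iff)

lemma P0_add: "P0 (p + q) = P0 p + P0 q"
proof -
  let ?S = "Poly_Mapping.keys p \<union> Poly_Mapping.keys q"
  have f: "finite ?S" by simp
  have "Poly_Mapping.keys (p + q) \<subseteq> ?S" by (rule keys_add)
  then show ?thesis by (simp add: P0_on[OF f] lookup_add sg_add_left sum.distrib)
qed
lemma P1_add: "P1 (p + q) = P1 p + P1 q"
proof -
  let ?S = "Poly_Mapping.keys p \<union> Poly_Mapping.keys q"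
  have f: "finite ?S" by simp
  have "Poly_Mapping.keys (p + q) \<subseteq> ?S" by (rule keys_add)
  then show ?thesis by (simp add: P1_on[OF f] lookup_add sm_add_left sum.distrib)
qed
lemma P0_smult: "P0 (mag_smult c p) = sg c (P0 p)"
proof -
  have "Poly_Mapping.keys (mag_smult c p) \<subseteq> Poly_Mapping.keys p" by (auto simp: in_keys_iff)
  then have "P0 (mag_smult c p) = (\<Sum>s\<in>Poly_Mapping.keys p. sg (c * Poly_Mapping.lookup p s) (e0 s))"
    by (simp add: P0_on[OF finite_keys])
  also have "\<dots> = sg c (P0 p)" by (simp add: Phi0_def sg_sum)
  finally show ?thesis .
qed
lemma P1_smult: "P1 (mag_smult c p) = sm c (P1 p)"
proof -
  have "Poly_Mapping.keys (mag_smult c p) \<subseteq> Poly_Mapping.keys p" by (auto simp: in_keys_iff)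
  then have "P1 (mag_smult c p) = (\<Sum>s\<in>Poly_Mapping.keys p. sm (c * Poly_Mapping.lookup p s) (e1 s))"
    by (simp add: P1_on[OF finite_keys])
  also have "\<dots> = sm c (P1 p)" by (simp add: Phi1_def sm_sum)
  finally show ?thesis .
qed
lemma P0_basis: "P0 (basis_el s) = e0 s"
proof -
  have "Poly_Mapping.keys (basis_el s :: ('g + 'm) ftree \<Rightarrow>\<^sub>0 'k) \<subseteq> {s}" by (auto simp: in_keys_iff lookup_basis_el split: if_splits)
  then show ?thesis by (simp add: P0_on[of "{s}"] lookup_basis_el)
qed
lemma P1_basis: "P1 (basis_el s :: ('g + 'm) ftree \<Rightarrow>\<^sub>0 'k) = e1 s"
proof -
  have "Poly_Mapping.keys (basis_el s :: ('g + 'm) ftree \<Rightarrow>\<^sub>0 'k) \<subseteq> {s}" by (auto simp: in_keys_iff lookup_basis_el split: if_splits)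
  then show ?thesis by (simp add: P1_on[of "{s}"] lookup_basis_el)
qed
lemma P0_zero[simp]: "P0 0 = 0" by (simp add: Phi0_def)
lemma P1_zero[simp]: "P1 0 = 0" by (simp add: Phi1_def)
lemma P0_diff: "P0 (p - q) = P0 p - P0 q" using P0_add[of "p - q" q] by simp
lemma P1_diff: "P1 (p - q) = P1 p - P1 q" using P1_add[of "p - q" q] by simp

lemma P0_mult: "P0 (mag_mult p q) = br (P0 p) (P0 q)"
proof (induction p rule: pm_induct)
  case 1 then show ?case by simp
next
  case (2 s c)
  show ?case
  proof (induction q rule: pm_induct)
    case 1 then show ?case by simp
  next
    case (2 u e)
    show ?case by (simp add: single_smult mag_mult_smult_left mag_mult_smult_right mag_mult_basis
        P0_smult P0_basis br_sc1 br_sc2 mult.commute)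
  next
    case (3 a b) then show ?case by (simp add: mag_mult_add_right P0_add br_add2)
  qed
next
  case (3 a b) then show ?case by (simp add: mag_mult_add_left P0_add br_add1)
qed

lemma P1_mult: "P1 (mag_mult p q) = act (P1 p) (P0 q) - act (P1 q) (P0 p)"
proof (induction p rule: pm_induct)
  case 1 then show ?case by simp
next
  case (2 s c)
  show ?case
  proof (induction q rule: pm_induct)
    case 1 then show ?case by simp
  next
    case (2 u e)
    show ?case by (simp add: single_smult mag_mult_smult_left mag_mult_smult_right mag_mult_basis
        P0_smult P0_basis P1_smult P1_basis act_sc1 act_sc2 sm_diff mult.commute)
  next
    case (3 a b) then show ?case by (simp add: mag_mult_add_right P0_add P1_add act_add2 act_add1 algebra_simps)
  qed
next
  case (3 a b) then show ?case by (simp add: mag_mult_add_left P0_add P1_add act_add1 act_add2 algebra_simps)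
qed

end


context LMctx
begin

lemma br_neg2: "br z (- x) = - br z x" using br_diff2[of z 0 x] by simp
lemma br_neg1: "br (- x) z = - br x z" using br_diff1[of 0 x z] by simp

lemma br_jac2: "br a (br b c) - br (br a b) c - br b (br a c) = 0"
proof -
  have "br (br a b) c = - br c (br a b)" by (rule br_anti)
  moreover have "br b (br a c) = - br b (br c a)" by (simp add: br_anti[of a c] br_neg2)
  ultimately show ?thesis using br_jac[of a b c] by (simp add: algebra_simps)
qed

lemma act_jac: "act ms (br b c) - act (act mt c - act mu b) a - (act (act ms b - act mt a) c - act mu (br a b))
   - (act mt (br a c) - act (act ms c - act mu a) b) = 0"
  by (simp add: act_br act_diff1 algebra_simps)

lemma K_ant: "P0 (mag_mult (basis_el s) (basis_el u) + mag_smult ((-1)^(tdeg s * tdeg u)) (mag_mult (basis_el u) (basis_el s))) = 0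
  \<and> P1 (mag_mult (basis_el s) (basis_el u) + mag_smult ((-1)^(tdeg s * tdeg u)) (mag_mult (basis_el u) (basis_el s))) = 0"
proof (cases "even (tdeg s * tdeg u)")
  case True
  then show ?thesis by (simp add: P0_add P1_add P0_smult P1_smult P0_mult P1_mult P0_basis P1_basis br_anti[of "e0 u"])
next
  case False
  then have "tdeg s \<noteq> 0" "tdeg u \<noteq> 0" by (auto intro: ccontr)
  then have "e0 s = 0" "e0 u = 0" by (simp_all add: ev0_deg)
  then show ?thesis by (simp add: P0_add P1_add P0_smult P1_smult P0_mult P1_mult P0_basis P1_basis)
qed

lemma K_jac: "P0 (mag_mult (basis_el s) (mag_mult (basis_el t) (basis_el u))
        - mag_mult (mag_mult (basis_el s) (basis_el t)) (basis_el u)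
        - mag_smult ((-1) ^ (tdeg s * tdeg t)) (mag_mult (basis_el t) (mag_mult (basis_el s) (basis_el u)))) = 0
  \<and> P1 (mag_mult (basis_el s) (mag_mult (basis_el t) (basis_el u))
        - mag_mult (mag_mult (basis_el s) (basis_el t)) (basis_el u)
        - mag_smult ((-1) ^ (tdeg s * tdeg t)) (mag_mult (basis_el t) (mag_mult (basis_el s) (basis_el u)))) = 0"
proof (cases "even (tdeg s * tdeg t)")
  case True
  then show ?thesis by (simp add: P0_diff P1_diff P0_smult P1_smult P0_mult P1_mult P0_basis P1_basis br_jac2 act_jac)
next
  case False
  then have "tdeg s \<noteq> 0" "tdeg t \<noteq> 0" by (auto intro: ccontr)
  then have "e0 s = 0" "e0 t = 0" by (simp_all add: ev0_deg)
  then show ?thesis by (simp add: P0_diff P1_diff P0_smult P1_smult P0_mult P1_mult P0_basis P1_basis)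
qed

lemma kernel: "a \<in> E_ideal sg sm br act \<Longrightarrow> P0 a = 0 \<and> P1 a = 0"
  unfolding E_ideal_def
proof (induction rule: ideal_gen.induct)
  case (gen r)
  then consider (l) "r \<in> lin_rels sg sm" | (g) "r \<in> glie_rels" | (e) "r \<in> E_rels br act" by blast
  then show ?case
  proof cases
    case l then show ?thesis unfolding lin_rels_def
      by (auto simp: P0_diff P1_diff P0_smult P1_smult P0_basis P1_basis)
  next
    case g then show ?thesis unfolding glie_rels_def using K_ant K_jac by blast
  next
    case e then show ?thesis unfolding E_rels_def
      by (auto simp: P0_diff P1_diff P0_mult P1_mult P0_basis P1_basis)
  qed
next
  case zero then show ?case by simp
next
  case (add a b) then show ?case by (simp add: P0_add P1_add)
next
  case (smult a c) then show ?case by (simp add: P0_smult P1_smult)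
next
  case (left a p) then show ?case by (simp add: P0_mult P1_mult)
next
  case (right a p) then show ?case by (simp add: P0_mult P1_mult)
qed

lemma inj0: "basis_el (Leaf (Inl x)) \<in> E_ideal sg sm br act \<Longrightarrow> x = 0"
  using kernel[of "basis_el (Leaf (Inl x))"] by (simp add: P0_basis)
lemma inj1: "(basis_el (Leaf (Inr m)) :: ('g + 'm) ftree \<Rightarrow>\<^sub>0 'k) \<in> E_ideal sg sm br act \<Longrightarrow> m = 0"
  using kernel[of "basis_el (Leaf (Inr m))"] by (simp add: P1_basis)

end


lemma homog_eq: "x \<in> homog n \<Longrightarrow> n = m \<Longrightarrow> x \<in> homog m" by simp

lemma gens_homog: "r \<in> lin_rels sg sm \<union> glie_rels \<union> E_rels br act \<Longrightarrow> \<exists>k. r \<in> homog k"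
proof -
  have L: "basis_el (Leaf (Inl x)) \<in> homog 0" for x using homog_basis[of "Leaf (Inl x)"] by simp
  have Rr: "basis_el (Leaf (Inr x)) \<in> homog 1" for x using homog_basis[of "Leaf (Inr x)"] by simp
  assume "r \<in> lin_rels sg sm \<union> glie_rels \<union> E_rels br act"
  then consider (l) "r \<in> lin_rels sg sm" | (g) "r \<in> glie_rels" | (e) "r \<in> E_rels br act" by blast
  then show ?thesis
  proof cases
    case l
    then consider (1) x y where "r = basis_el (Leaf (Inl (x + y))) - basis_el (Leaf (Inl x)) - basis_el (Leaf (Inl y))"
      | (2) c x where "r = basis_el (Leaf (Inl (sg c x))) - mag_smult c (basis_el (Leaf (Inl x)))"
      | (3) x y where "r = basis_el (Leaf (Inr (x + y))) - basis_el (Leaf (Inr x)) - basis_el (Leaf (Inr y))"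
      | (4) c x where "r = basis_el (Leaf (Inr (sm c x))) - mag_smult c (basis_el (Leaf (Inr x)))"
      unfolding lin_rels_def by blast
    then show ?thesis
    proof cases
      case 1 then have "r \<in> homog 0" by (simp only:) (intro homog_diff homog_smult L)
      then show ?thesis by blast
    next
      case 2 then have "r \<in> homog 0" by (simp only:) (intro homog_diff homog_smult L)
      then show ?thesis by blast
    next
      case 3 then have "r \<in> homog 1" by (simp only:) (intro homog_diff homog_smult Rr)
      then show ?thesis by blast
    next
      case 4 then have "r \<in> homog 1" by (simp only:) (intro homog_diff homog_smult Rr)
      then show ?thesis by blast
    qed
  next
    case g
    then consider (a) s u where "r = mag_mult (basis_el s) (basis_el u)
        + mag_smult ((-1) ^ (tdeg s * tdeg u)) (mag_mult (basis_el u) (basis_el s))"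
      | (j) s t u where "r = mag_mult (basis_el s) (mag_mult (basis_el t) (basis_el u))
        - mag_mult (mag_mult (basis_el s) (basis_el t)) (basis_el u)
        - mag_smult ((-1) ^ (tdeg s * tdeg t)) (mag_mult (basis_el t) (mag_mult (basis_el s) (basis_el u)))"
      unfolding glie_rels_def by blast
    then show ?thesis
    proof cases
      case a
      have "mag_mult (basis_el s) (basis_el u) \<in> homog (tdeg s + tdeg u)" by (intro homog_mult homog_basis)
      moreover have "mag_mult (basis_el u) (basis_el s) \<in> homog (tdeg u + tdeg s)" by (intro homog_mult homog_basis)
      then have "mag_mult (basis_el u) (basis_el s) \<in> homog (tdeg s + tdeg u)" by (simp add: add.commute)
      ultimately have "r \<in> homog (tdeg s + tdeg u)" unfolding a by (intro homog_add homog_smult)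
      then show ?thesis by blast
    next
      case j
      have "mag_mult (basis_el s) (mag_mult (basis_el t) (basis_el u)) \<in> homog (tdeg s + (tdeg t + tdeg u))" by (intro homog_mult homog_basis)
      moreover have "mag_mult (mag_mult (basis_el s) (basis_el t)) (basis_el u) \<in> homog ((tdeg s + tdeg t) + tdeg u)"
        by (intro homog_mult homog_basis)
      then have "mag_mult (mag_mult (basis_el s) (basis_el t)) (basis_el u) \<in> homog (tdeg s + (tdeg t + tdeg u))"
        by (simp add: add_ac)
      moreover have "mag_mult (basis_el t) (mag_mult (basis_el s) (basis_el u)) \<in> homog (tdeg t + (tdeg s + tdeg u))"
        by (intro homog_mult homog_basis)
      then have "mag_mult (basis_el t) (mag_mult (basis_el s) (basis_el u)) \<in> homog (tdeg s + (tdeg t + tdeg u))"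
        by (simp add: add_ac)
      ultimately have "r \<in> homog (tdeg s + (tdeg t + tdeg u))" unfolding j by (intro homog_diff homog_smult)
      then show ?thesis by blast
    qed
  next
    case e
    then consider (1) x y where "r = mag_mult (basis_el (Leaf (Inl x))) (basis_el (Leaf (Inl y))) - basis_el (Leaf (Inl (br x y)))"
      | (2) x y where "r = mag_mult (basis_el (Leaf (Inr x))) (basis_el (Leaf (Inl y))) - basis_el (Leaf (Inr (act x y)))"
      unfolding E_rels_def by blast
    then show ?thesis
    proof cases
      case 1 then have "r \<in> homog (0 + 0)" by (simp only:) (intro homog_diff homog_mult L, simp add: L)
      then show ?thesis by blast
    next
      case 2
      have "mag_mult (basis_el (Leaf (Inr x))) (basis_el (Leaf (Inl y))) \<in> homog 1" using homog_mult[OF Rr L] by simp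
      then have "r \<in> homog 1" unfolding 2 by (intro homog_diff Rr)
      then show ?thesis by blast
    qed
  qed
qed

lemma rep_sum:
  fixes Lf :: "'v::ab_group_add \<Rightarrow> ('x ftree \<Rightarrow>\<^sub>0 'k::comm_ring_1)"
  assumes add: "\<And>x y. Lf (x + y) - Lf x - Lf y \<in> ideal_gen R"
    and sc: "\<And>c x. Lf (scv c x) - mag_smult c (Lf x) \<in> ideal_gen R"
    and rep: "\<And>t. t \<in> Poly_Mapping.keys a \<Longrightarrow> \<exists>x. basis_el t - Lf x \<in> ideal_gen R"
  shows "\<exists>x. a - Lf x \<in> ideal_gen R"
proof (rule pm_induct_on[of a "Poly_Mapping.keys a"])
  show "Poly_Mapping.keys a \<subseteq> Poly_Mapping.keys a" by simp
next
  have "- Lf 0 \<in> ideal_gen R" using add[of 0 0] by simp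
  then have "Lf 0 \<in> ideal_gen R" using ig_neg by fastforce
  then have "0 - Lf 0 \<in> ideal_gen R" using ig_neg by fastforce
  then show "\<exists>x. 0 - Lf x \<in> ideal_gen R" by blast
next
  fix s c assume "s \<in> Poly_Mapping.keys a"
  then obtain x where x: "basis_el s - Lf x \<in> ideal_gen R" using rep by blast
  have "Poly_Mapping.single s c - Lf (scv c x) = mag_smult c (basis_el s - Lf x) - (Lf (scv c x) - mag_smult c (Lf x))"
    by (simp add: single_smult smult_diff)
  also have "\<dots> \<in> ideal_gen R" by (rule ig_diff[OF ideal_gen.smult[OF x] sc])
  finally show "\<exists>x. Poly_Mapping.single s c - Lf x \<in> ideal_gen R" by blast
next
  fix p q assume "\<exists>x. p - Lf x \<in> ideal_gen R" "\<exists>x. q - Lf x \<in> ideal_gen R"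
  then obtain x y where x: "p - Lf x \<in> ideal_gen R" and y: "q - Lf y \<in> ideal_gen R" by blast
  have "p + q - Lf (x + y) = (p - Lf x) + (q - Lf y) - (Lf (x + y) - Lf x - Lf y)" by (simp add: algebra_simps)
  also have "\<dots> \<in> ideal_gen R" by (rule ig_diff[OF ideal_gen.add[OF x y] add])
  finally show "\<exists>x. p + q - Lf x \<in> ideal_gen R" by blast
qed

context LMctx
begin

abbreviation II where "II \<equiv> E_ideal sg sm br act"
abbreviation LL :: "'g \<Rightarrow> ('g + 'm) ftree \<Rightarrow>\<^sub>0 'k" where "LL x \<equiv> basis_el (Leaf (Inl x))"
abbreviation RR :: "'m \<Rightarrow> ('g + 'm) ftree \<Rightarrow>\<^sub>0 'k" where "RR x \<equiv> basis_el (Leaf (Inr x))"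

lemma I_gen: "r \<in> lin_rels sg sm \<union> glie_rels \<union> E_rels br act \<Longrightarrow> r \<in> II"
  unfolding E_ideal_def by (rule ideal_gen.gen)

lemma L_add: "LL (x + y) - LL x - LL y \<in> II" by (rule I_gen) (auto simp: lin_rels_def)
lemma L_sc: "LL (sg c x) - mag_smult c (LL x) \<in> II" by (rule I_gen) (auto simp: lin_rels_def)
lemma R_add: "RR (x + y) - RR x - RR y \<in> II" by (rule I_gen) (auto simp: lin_rels_def)
lemma R_sc: "RR (sm c x) - mag_smult c (RR x) \<in> II" by (rule I_gen) (auto simp: lin_rels_def)
lemma E_br: "mag_mult (LL x) (LL y) - LL (br x y) \<in> II" by (rule I_gen) (auto simp: E_rels_def)
lemma E_act: "mag_mult (RR m) (LL y) - RR (act m y) \<in> II" by (rule I_gen) (auto simp: E_rels_def)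
lemma glie_sub: "glie_rels \<subseteq> lin_rels sg sm \<union> glie_rels \<union> E_rels br act" by blast

lemma I_diff: "a \<in> II \<Longrightarrow> b \<in> II \<Longrightarrow> a - b \<in> II" unfolding E_ideal_def by (rule ig_diff)
lemma I_add: "a \<in> II \<Longrightarrow> b \<in> II \<Longrightarrow> a + b \<in> II" unfolding E_ideal_def by (rule ideal_gen.add)
lemma I_left: "a \<in> II \<Longrightarrow> mag_mult p a \<in> II" unfolding E_ideal_def by (rule ideal_gen.left)
lemma I_right: "a \<in> II \<Longrightarrow> mag_mult a p \<in> II" unfolding E_ideal_def by (rule ideal_gen.right)
lemma I_zero: "0 \<in> II" unfolding E_ideal_def by (rule ideal_gen.zero)

lemma rep0: "tdeg t = 0 \<Longrightarrow> basis_el t - LL (e0 t) \<in> II"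
proof (induction t)
  case (Leaf x) then show ?case by (cases x) (auto simp: I_zero)
next
  case (Node s u)
  then have IH: "basis_el s - LL (e0 s) \<in> II" "basis_el u - LL (e0 u) \<in> II" by auto
  have "basis_el (Node s u) - LL (e0 (Node s u)) =
      mag_mult (basis_el s - LL (e0 s)) (basis_el u) + mag_mult (LL (e0 s)) (basis_el u - LL (e0 u))
      + (mag_mult (LL (e0 s)) (LL (e0 u)) - LL (br (e0 s) (e0 u)))"
    by (simp add: mag_mult_basis[symmetric] mag_mult_diff_left mag_mult_diff_right)
  also have "\<dots> \<in> II" by (rule I_add[OF I_add[OF I_right[OF IH(1)] I_left[OF IH(2)]] E_br])
  finally show ?case .
qed

lemma RR_neg: "RR y + RR (- y) \<in> II"
proof -
  have "- RR 0 \<in> II" using R_add[of 0 0] by simp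
  then have z: "RR 0 \<in> II" using I_diff[OF I_zero] by fastforce
  have "RR y + RR (- y) = RR 0 - (RR (y + - y) - RR y - RR (- y))" by simp
  also have "\<dots> \<in> II" using z R_add by (rule I_diff)
  finally show ?thesis .
qed

lemma rep1_case: "tdeg s = 1 \<Longrightarrow> tdeg u = 0 \<Longrightarrow> basis_el s - RR (e1 s) \<in> II \<Longrightarrow> basis_el u - LL (e0 u) \<in> II
   \<Longrightarrow> mag_mult (basis_el s) (basis_el u) - RR (act (e1 s) (e0 u)) \<in> II"
proof -
  assume h: "basis_el s - RR (e1 s) \<in> II" "basis_el u - LL (e0 u) \<in> II"
  have "mag_mult (basis_el s) (basis_el u) - RR (act (e1 s) (e0 u)) =
      mag_mult (basis_el s - RR (e1 s)) (basis_el u) + mag_mult (RR (e1 s)) (basis_el u - LL (e0 u))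
      + (mag_mult (RR (e1 s)) (LL (e0 u)) - RR (act (e1 s) (e0 u)))"
    by (simp add: mag_mult_diff_left mag_mult_diff_right)
  also have "\<dots> \<in> II" by (rule I_add[OF I_add[OF I_right[OF h(1)] I_left[OF h(2)]] E_act])
  finally show ?thesis .
qed

lemma rep1: "tdeg t = 1 \<Longrightarrow> basis_el t - RR (e1 t) \<in> II"
proof (induction t)
  case (Leaf x) then show ?case by (cases x) (auto simp: I_zero)
next
  case (Node s u)
  then have "(tdeg s = 1 \<and> tdeg u = 0) \<or> (tdeg s = 0 \<and> tdeg u = 1)" by auto
  then show ?case
  proof
    assume a: "tdeg s = 1 \<and> tdeg u = 0"
    then have "e1 u = 0" by (simp add: ev1_deg)
    moreover have "basis_el s - RR (e1 s) \<in> II" using Node a by simp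
    ultimately show ?thesis using rep1_case[of s u] rep0[of u] a by (simp add: mag_mult_basis)
  next
    assume a: "tdeg s = 0 \<and> tdeg u = 1"
    then have e: "e1 s = 0" by (simp add: ev1_deg)
    have "basis_el u - RR (e1 u) \<in> II" using Node a by simp
    then have X: "mag_mult (basis_el u) (basis_el s) - RR (act (e1 u) (e0 s)) \<in> II"
      using rep1_case[of u s] rep0[of s] a by simp
    have "mag_mult (basis_el s) (basis_el u) + mag_smult ((-1) ^ (tdeg s * tdeg u)) (mag_mult (basis_el u) (basis_el s)) \<in> II"
      by (rule I_gen) (unfold glie_rels_def, blast)
    then have A: "mag_mult (basis_el s) (basis_el u) + mag_mult (basis_el u) (basis_el s) \<in> II"
      using a by simp
    let ?y = "act (e1 u) (e0 s)"
    have "basis_el (Node s u) - RR (e1 (Node s u)) =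
       (mag_mult (basis_el s) (basis_el u) + mag_mult (basis_el u) (basis_el s))
       - (mag_mult (basis_el u) (basis_el s) - RR ?y) - (RR ?y + RR (- ?y))"
      using e by (simp add: mag_mult_basis)
    also have "\<dots> \<in> II" by (rule I_diff[OF I_diff[OF A X] RR_neg])
    finally show ?thesis .
  qed
qed

lemma surj0: "a \<in> homog 0 \<Longrightarrow> \<exists>x. a - LL x \<in> II"
  unfolding E_ideal_def
  by (rule rep_sum[where scv = sg, OF L_add[unfolded E_ideal_def] L_sc[unfolded E_ideal_def]])
     (use rep0[unfolded E_ideal_def] in \<open>auto simp: homog_def\<close>)

lemma surj1: "a \<in> homog 1 \<Longrightarrow> \<exists>x. a - RR x \<in> II"
  unfolding E_ideal_def
  by (rule rep_sum[where scv = sm, OF R_add[unfolded E_ideal_def] R_sc[unfolded E_ideal_def]])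
     (use rep1[unfolded E_ideal_def] in \<open>auto simp: homog_def\<close>)

end


context LMctx
begin

abbreviation RS where "RS \<equiv> lin_rels sg sm \<union> glie_rels \<union> E_rels br act"

lemma RS_ig: "r \<in> RS \<Longrightarrow> r \<in> ideal_gen RS" by (rule ideal_gen.gen)

lemma d_add: "d (x + y) = d x + d y" using lin_add[OF lind] .
lemma d_sc: "d (sm c x) = sg c (d x)" using lin_scale[OF lind] .

lemma Dstab: "a \<in> II \<Longrightarrow> Dmag d a \<in> II"
  unfolding E_ideal_def
proof (induction rule: ideal_gen.induct)
  case (gen r)
  then consider (l) "r \<in> lin_rels sg sm" | (g) "r \<in> glie_rels" | (e) "r \<in> E_rels br act" by blast
  then show ?case
  proof cases
    case l
    then consider (1) x y where "r = LL (x + y) - LL x - LL y"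
      | (2) c x where "r = LL (sg c x) - mag_smult c (LL x)"
      | (3) x y where "r = RR (x + y) - RR x - RR y"
      | (4) c x where "r = RR (sm c x) - mag_smult c (RR x)"
      unfolding lin_rels_def by blast
    then show ?thesis
    proof cases
      case 1 then show ?thesis by (simp add: Dmag_diff Dmag_basis ideal_gen.zero)
    next
      case 2 then show ?thesis by (simp add: Dmag_diff Dmag_smult Dmag_basis ideal_gen.zero)
    next
      case 3
      have "Dmag d r = LL (d x + d y) - LL (d x) - LL (d y)"
        using 3 by (simp add: Dmag_diff Dmag_basis d_add)
      also have "\<dots> \<in> ideal_gen RS" by (rule RS_ig) (auto simp: lin_rels_def)
      finally show ?thesis .
    next
      case 4
      have "Dmag d r = LL (sg c (d x)) - mag_smult c (LL (d x))"
        using 4 by (simp add: Dmag_diff Dmag_smult Dmag_basis d_sc)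
      also have "\<dots> \<in> ideal_gen RS" by (rule RS_ig) (auto simp: lin_rels_def)
      finally show ?thesis .
    qed
  next
    case g
    then consider (a) s u where "r = mag_mult (basis_el s) (basis_el u)
        + mag_smult ((-1) ^ (tdeg s * tdeg u)) (mag_mult (basis_el u) (basis_el s))"
      | (j) s t u where "r = mag_mult (basis_el s) (mag_mult (basis_el t) (basis_el u))
        - mag_mult (mag_mult (basis_el s) (basis_el t)) (basis_el u)
        - mag_smult ((-1) ^ (tdeg s * tdeg t)) (mag_mult (basis_el t) (mag_mult (basis_el s) (basis_el u)))"
      unfolding glie_rels_def by blast
    then show ?thesis
    proof cases
      case a then show ?thesis using D_Ant_gen[OF glie_sub, of d s u] by simp
    next
      case j then show ?thesis using D_Jac_gen[OF glie_sub, of d s t u] by simp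
    qed
  next
    case e
    then consider (1) x y where "r = mag_mult (LL x) (LL y) - LL (br x y)"
      | (2) m y where "r = mag_mult (RR m) (LL y) - RR (act m y)"
      unfolding E_rels_def by blast
    then show ?thesis
    proof cases
      case 1 then show ?thesis by (simp add: Dmag_diff Leibniz Dmag_basis ideal_gen.zero)
    next
      case 2
      have "Dmag d r = mag_mult (LL (d m)) (LL y) - LL (br (d m) y)"
        using 2 by (simp add: Dmag_diff Leibniz Dmag_basis d_act)
      also have "\<dots> \<in> ideal_gen RS" by (rule RS_ig) (auto simp: E_rels_def)
      finally show ?thesis .
    qed
  qed
next
  case zero then show ?case by (simp add: ideal_gen.zero)
next
  case (add a b) then show ?case by (simp add: Dmag_add ideal_gen.add)
next
  case (smult a c) then show ?case by (simp add: Dmag_smult ideal_gen.smult)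
next
  case (left a p)
  then show ?case by (simp add: Leibniz ideal_gen.add ideal_gen.left)
next
  case (right a p)
  have hom: "\<And>r. r \<in> RS \<Longrightarrow> \<exists>k. r \<in> homog k" by (rule gens_homog)
  have "sig a \<in> ideal_gen RS" using ideal_sig[OF hom right(1)] .
  then show ?case using right by (simp add: Leibniz ideal_gen.add ideal_gen.right)
qed

end

theorem mainTheorem6:
  fixes sg :: "'k::field_char_0 \<Rightarrow> 'g::ab_group_add \<Rightarrow> 'g"
    and sm :: "'k \<Rightarrow> 'm::ab_group_add \<Rightarrow> 'm"
    and br :: "'g \<Rightarrow> 'g \<Rightarrow> 'g"
    and act :: "'m \<Rightarrow> 'g \<Rightarrow> 'm"
    and d :: "'m \<Rightarrow> 'g"
  assumes "LM_lie_algebra sg sm br act d"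
  shows
    \<comment> \<open>E g is a differential graded Lie algebra: the ideal is graded, stable under D, and D^2 = 0 mod it\<close>
    "(\<forall>a \<in> E_ideal sg sm br act. \<forall>n. hpart n a \<in> E_ideal sg sm br act)
   \<and> (\<forall>a \<in> E_ideal sg sm br act. Dmag d a \<in> E_ideal sg sm br act)
   \<and> (\<forall>a :: ('g + 'm) ftree \<Rightarrow>\<^sub>0 'k. Dmag d (Dmag d a) \<in> E_ideal sg sm br act)
    \<comment> \<open>degree 0: g0 -> (E g)_0 is a linear bijection preserving brackets\<close>
   \<and> (\<forall>x y. basis_el (Leaf (Inl (x + y))) - basis_el (Leaf (Inl x)) - basis_el (Leaf (Inl y))
              \<in> E_ideal sg sm br act)
   \<and> (\<forall>c x. basis_el (Leaf (Inl (sg c x))) - mag_smult c (basis_el (Leaf (Inl x)))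
              \<in> E_ideal sg sm br act)
   \<and> (\<forall>x. basis_el (Leaf (Inl x)) \<in> E_ideal sg sm br act \<longrightarrow> x = 0)
   \<and> (\<forall>a \<in> homog 0. \<exists>x. a - basis_el (Leaf (Inl x)) \<in> E_ideal sg sm br act)
   \<and> (\<forall>x y. mag_mult (basis_el (Leaf (Inl x))) (basis_el (Leaf (Inl y))) - basis_el (Leaf (Inl (br x y)))
              \<in> E_ideal sg sm br act)
    \<comment> \<open>degree 1: g1 -> (E g)_1 is a linear bijection compatible with the action and with d\<close>
   \<and> (\<forall>m n. basis_el (Leaf (Inr (m + n))) - basis_el (Leaf (Inr m)) - basis_el (Leaf (Inr n))
              \<in> E_ideal sg sm br act)
   \<and> (\<forall>c m. basis_el (Leaf (Inr (sm c m))) - mag_smult c (basis_el (Leaf (Inr m)))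
              \<in> E_ideal sg sm br act)
   \<and> (\<forall>m. basis_el (Leaf (Inr m)) \<in> E_ideal sg sm br act \<longrightarrow> m = 0)
   \<and> (\<forall>a \<in> homog 1. \<exists>m. a - basis_el (Leaf (Inr m)) \<in> E_ideal sg sm br act)
   \<and> (\<forall>m y. mag_mult (basis_el (Leaf (Inr m))) (basis_el (Leaf (Inl y))) - basis_el (Leaf (Inr (act m y)))
              \<in> E_ideal sg sm br act)
   \<and> (\<forall>m. Dmag d (basis_el (Leaf (Inr m)) :: ('g + 'm) ftree \<Rightarrow>\<^sub>0 'k) = basis_el (Leaf (Inl (d m))))"
proof -
  interpret LMctx sg sm br act d unfolding LMctx_def by (rule assms)
  have hom: "\<And>r. r \<in> RS \<Longrightarrow> \<exists>k. r \<in> homog k" by (rule gens_homog)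
  have c1: "\<forall>a \<in> E_ideal sg sm br act. \<forall>n. hpart n a \<in> E_ideal sg sm br act"
    unfolding E_ideal_def using ideal_graded[OF hom] by blast
  have c3: "\<forall>a :: ('g + 'm) ftree \<Rightarrow>\<^sub>0 'k. Dmag d (Dmag d a) \<in> E_ideal sg sm br act"
    by (simp add: D2 I_zero)
  have c14: "\<forall>m. Dmag d (basis_el (Leaf (Inr m)) :: ('g + 'm) ftree \<Rightarrow>\<^sub>0 'k) = basis_el (Leaf (Inl (d m)))"
    by (simp add: Dmag_basis)
  show ?thesis
    apply (intro conjI)
    apply (rule c1)
    using Dstab apply blast
    apply (rule c3)
    using L_add apply blast
    using L_sc apply blast
    using inj0 apply blast
    using surj0 apply blast
    using E_br apply blast
    using R_add apply blast
    using R_sc apply blast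
    using inj1 apply blast
    using surj1 apply blast
    using E_act apply blast
    by (rule c14)
qed


end
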